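(* Let $\mathcal{H}$ be a real Hilbert space, let $A:\mathcal{H}\rightrightarrows\mathcal{H}$ be maximal monotone with $A^{-1}(0)=\{x\in\mathcal{H}: 0\in Ax\}\neq\emptyset$, let $\theta>0$, let $p\geq 1$ be an integer, and let $x_0\in\Omega:=\{x\in\mathcal{H}: 0\notin Ax\}$. Then there exists $t_0>0$ such that the closed-loop control system \[ \dot{x}(t)+x(t)-(I+\lambda(t)A)^{-1}x(t)=0,\qquad \lambda(t)\,\|(I+\lambda(t)A)^{-1}x(t)-x(t)\|^{p-1}=\theta,\qquad x(0)=x_0, \] has a unique solution $(x,\lambda):[0,t_0]\to\mathcal{H}\times(0,+\infty)$. Moreover, $x(\cdot)$ is continuously differentiable and $\lambda(\cdot)$ is locally Lipschitz continuous.
   Context: $(I+\lambda A)^{-1}$ denotes the resolvent of $A$ of index $\lambda>0$ (single-valued and defined on all of $\mathcal{H}$ since $A$ is maximal monotone). For $p\geq 2$ and $x\in\Omega$, the map $\lambda\mapsto \lambda^{1/(p-1)}\|x-(I+\lambda A)^{-1}x\|$ is a continuous strictly increasing bijection from $[0,\infty)$ onto $[0,\infty)$, so the second equation determines $\lambda(t)$ uniquely from $x(t)$ whenever $x(t)\in\Omega$; for $p=1$ it reads $\lambda(t)=\theta$. *)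

theory Defs
  imports "HOL-Analysis.Analysis"
begin

text \<open>Set-valued operators on a real Hilbert space are functions 'a \<Rightarrow> 'a set
  (A x is the image set Ax; the graph is {(x,u). u \<in> A x}).\<close>

definition monotone_op :: "('a::real_inner \<Rightarrow> 'a set) \<Rightarrow> bool" where
  "monotone_op A \<longleftrightarrow> (\<forall>x y u v. u \<in> A x \<longrightarrow> v \<in> A y \<longrightarrow> inner (x - y) (u - v) \<ge> 0)"

definition maximal_monotone :: "('a::real_inner \<Rightarrow> 'a set) \<Rightarrow> bool" where
  "maximal_monotone A \<longleftrightarrow> monotone_op A \<and>
     (\<forall>B. monotone_op B \<longrightarrow> (\<forall>x. A x \<subseteq> B x) \<longrightarrow> B = A)"

text \<open>Resolvent (I + \<lambda>A)^{-1} x: the (unique, for maximal monotone A and \<lambda> > 0)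
  point y with x \<in> y + \<lambda> A y.\<close>
definition resolvent :: "('a::real_inner \<Rightarrow> 'a set) \<Rightarrow> real \<Rightarrow> 'a \<Rightarrow> 'a" where
  "resolvent A lam x = (THE y. \<exists>u \<in> A y. x = y + lam *\<^sub>R u)"

definition locally_lipschitz_on :: "real set \<Rightarrow> (real \<Rightarrow> real) \<Rightarrow> bool" where
  "locally_lipschitz_on S f \<longleftrightarrow>
     (\<forall>t \<in> S. \<exists>r > 0. \<exists>L. L-lipschitz_on (cball t r \<inter> S) f)"

definition cl_solution ::
  "('a::real_inner \<Rightarrow> 'a set) \<Rightarrow> real \<Rightarrow> nat \<Rightarrow> 'a \<Rightarrow> real \<Rightarrow> (real \<Rightarrow> 'a) \<Rightarrow> (real \<Rightarrow> real) \<Rightarrow> bool"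
  where
  "cl_solution A \<theta> p x0 t0 x lam \<longleftrightarrow>
     x 0 = x0 \<and>
     (\<forall>t \<in> {0..t0}. lam t > 0 \<and>
        (x has_vector_derivative (resolvent A (lam t) (x t) - x t)) (at t within {0..t0}) \<and>
        lam t * norm (resolvent A (lam t) (x t) - x t) ^ (p - 1) = \<theta>)"

end

theory Submission
  imports Defs
begin
lemma parallelogram_eq:
  fixes a b :: "'a::real_inner"
  shows "norm (a - b)^2 = 2 * norm a ^2 + 2 * norm b^2 - norm (a + b)^2"
  by (simp add: power2_norm_eq_inner inner_simps algebra_simps)

lemma norm_add_sq:
  fixes a b :: "'a::real_inner"
  shows "norm (a + b)^2 = norm a^2 + 2 * inner a b + norm b^2"
  by (simp add: power2_norm_eq_inner inner_add_left inner_add_right inner_commute)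

lemma norm_diff_sq:
  fixes a b :: "'a::real_inner"
  shows "norm (a - b)^2 = norm a^2 - 2 * inner a b + norm b^2"
  by (simp add: power2_norm_eq_inner inner_diff_left inner_diff_right inner_commute)

lemma nearest_var:
  fixes S :: "'a::real_inner set"
  assumes "convex S" "q \<in> S" "\<forall>s\<in>S. norm (q - w) \<le> norm (s - w)" "s \<in> S"
  shows "inner (w - q) (s - q) \<le> 0" and "norm (s - q)^2 \<le> norm (s - w)^2 - norm (q - w)^2"
proof -
  define ip where "ip = inner (q - w) (s - q)"
  define N where "N = norm (s - q)^2"
  have key: "0 \<le> 2 * ip + t * N" if t: "0 < t" "t \<le> 1" for t
  proof -
    have "q + t *\<^sub>R (s - q) \<in> S"
      using assms(1,2,4) t convexD[of S q s "1 - t" t] by (simp add: algebra_simps)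
    hence "norm (q - w)^2 \<le> norm (q + t *\<^sub>R (s - q) - w)^2"
      using assms(3) by (simp add: power_mono)
    also have "norm (q + t *\<^sub>R (s - q) - w)^2 = norm ((q - w) + t *\<^sub>R (s - q))^2"
      by (simp add: algebra_simps)
    also have "\<dots> = norm (q - w)^2 + 2 * t * ip + t^2 * N"
      unfolding norm_add_sq ip_def N_def by (simp add: power_mult_distrib)
    finally have "0 \<le> t * (2 * ip + t * N)" by (simp add: algebra_simps power2_eq_square)
    thus ?thesis using t by (simp add: zero_le_mult_iff)
  qed
  have ip: "0 \<le> ip"
  proof (rule ccontr)
    assume neg: "\<not> 0 \<le> ip"
    show False
    proof (cases "N = 0")
      case True thus False using key[of 1] neg by simp
    next
      case False
      hence Np: "N > 0" unfolding N_def by simp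
      define t where "t = min 1 (- ip / N)"
      have "ip < 0" using neg by simp
      hence "- ip / N > 0" using Np by (simp add: divide_neg_pos)
      hence t: "0 < t" "t \<le> 1" by (auto simp: t_def)
      have "t \<le> - ip / N" by (simp add: t_def)
      hence "t * N \<le> - ip / N * N" using Np by (intro mult_right_mono) auto
      hence "t * N \<le> - ip" using Np by simp
      thus False using key[OF t] neg by simp
    qed
  qed
  have "inner (w - q) (s - q) = - ip" unfolding ip_def by (simp add: inner_diff_left)
  thus "inner (w - q) (s - q) \<le> 0" using ip by simp
  have "norm (s - w)^2 = norm ((q - w) + (s - q))^2" by simp
  also have "\<dots> = norm (q - w)^2 + 2 * ip + N" unfolding norm_add_sq ip_def N_def ..
  finally have "norm (s - w)^2 = norm (q - w)^2 + 2 * ip + N" .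
  thus "norm (s - q)^2 \<le> norm (s - w)^2 - norm (q - w)^2" using ip unfolding N_def by simp
qed

lemma min_norm_exists:
  fixes S :: "'a::{real_inner,complete_space} set"
  assumes "closed S" "convex S" "S \<noteq> {}"
  shows "\<exists>q\<in>S. \<forall>s\<in>S. norm q \<le> norm s"
proof -
  define d where "d = Inf (norm ` S)"
  have bdd: "bdd_below (norm ` S)" by (rule bdd_belowI[of _ 0]) auto
  have d0: "0 \<le> d" unfolding d_def using assms(3) by (auto intro: cInf_greatest)
  have dle: "d \<le> norm s" if "s \<in> S" for s unfolding d_def using bdd that by (auto intro: cInf_lower)
  have "\<exists>x\<in>S. norm x < d + 1 / Suc n" for n
  proof -
    have "Inf (norm ` S) < d + 1 / Suc n" unfolding d_def by simp
    then obtain y where "y \<in> norm ` S" "y < d + 1 / Suc n"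
      using cInf_lessD[of "norm ` S"] assms(3) by blast
    thus ?thesis by auto
  qed
  then obtain X where X: "\<And>n. X n \<in> S" "\<And>n. norm (X n) < d + 1 / Suc n" by metis
  define e where "e n = 1 / real (Suc n)" for n
  have e_pos: "0 < e n" "e n \<le> 1" for n unfolding e_def by auto
  have e0: "e \<longlonglongrightarrow> 0" unfolding e_def using LIMSEQ_inverse_real_of_nat
    by (simp add: inverse_eq_divide)
  have e_mono: "m \<ge> N \<Longrightarrow> e m \<le> e N" for m N unfolding e_def by (simp add: frac_le)
  have bound: "norm (X m - X n)^2 \<le> (8 * d + 4) * e N" if "m \<ge> N" "n \<ge> N" for m n N
  proof -
    have mid: "(1/2) *\<^sub>R (X m + X n) \<in> S"
      using convexD[OF assms(2) X(1)[of m] X(1)[of n], of "1/2" "1/2"] by (simp add: scaleR_add_right)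
    have "2 * d \<le> norm (X m + X n)"
      using dle[OF mid] by simp
    hence "(2 * d)^2 \<le> norm (X m + X n)^2"
      using d0 by (intro power_mono) auto
    hence sq: "4 * d^2 \<le> norm (X m + X n)^2" by (simp add: power_mult_distrib)
    have xm: "norm (X m) \<le> d + e m" using X(2)[of m] unfolding e_def by simp
    have xn: "norm (X n) \<le> d + e n" using X(2)[of n] unfolding e_def by simp
    have xm2: "norm (X m)^2 \<le> (d + e m)^2" using xm by (simp add: power_mono)
    have xn2: "norm (X n)^2 \<le> (d + e n)^2" using xn by (simp add: power_mono)
    have "norm (X m - X n)^2 \<le> 2 * (d + e m)^2 + 2 * (d + e n)^2 - 4 * d^2"
      using parallelogram_eq[of "X m" "X n"] xm2 xn2 sq by linarith
    also have "\<dots> = 4 * d * (e m + e n) + 2 * (e m)^2 + 2 * (e n)^2"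
      by (simp add: power2_eq_square algebra_simps)
    also have "\<dots> \<le> 4 * d * (2 * e N) + 2 * e N + 2 * e N"
    proof -
      have "(e m)^2 \<le> e m" using e_pos[of m] by (simp add: power2_eq_square mult_le_cancel_left1)
      hence a: "(e m)^2 \<le> e N" using e_mono[OF that(1)] by linarith
      have "(e n)^2 \<le> e n" using e_pos[of n] by (simp add: power2_eq_square mult_le_cancel_left1)
      hence b: "(e n)^2 \<le> e N" using e_mono[OF that(2)] by linarith
      have "e m + e n \<le> 2 * e N" using e_mono[OF that(1)] e_mono[OF that(2)] by simp
      hence "4 * d * (e m + e n) \<le> 4 * d * (2 * e N)" using d0 by (intro mult_left_mono) auto
      thus ?thesis using a b by linarith
    qed
    finally show ?thesis by (simp add: algebra_simps)
  qed
  have "Cauchy X"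
  proof (rule CauchyI)
    fix r :: real assume r: "0 < r"
    obtain N where N: "(8 * d + 4) * e N < r^2"
    proof -
      have "(\<lambda>n. (8 * d + 4) * e n) \<longlonglongrightarrow> (8 * d + 4) * 0"
        by (intro tendsto_mult tendsto_const e0)
      hence "\<forall>\<^sub>F n in sequentially. (8 * d + 4) * e n < r^2" using r
        by (auto intro: order_tendstoD)
      thus ?thesis using that by (auto simp: eventually_sequentially)
    qed
    show "\<exists>M. \<forall>m\<ge>M. \<forall>n\<ge>M. norm (X m - X n) < r"
    proof (intro exI allI impI)
      fix m n assume "N \<le> m" "N \<le> n"
      hence "norm (X m - X n)^2 < r^2" using bound N by (meson order_le_less_trans)
      thus "norm (X m - X n) < r" using r by (simp add: power_less_imp_less_base)
    qed
  qed
  then obtain q where q: "X \<longlonglongrightarrow> q" using Cauchy_convergent_iff convergent_def by blast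
  have qS: "q \<in> S" using closed_sequentially[OF assms(1) X(1) q] .
  have "norm q \<le> d"
  proof (rule LIMSEQ_le[OF tendsto_norm[OF q]])
    show "(\<lambda>n. d + e n) \<longlonglongrightarrow> d"
      using tendsto_add[OF tendsto_const[of d] e0] by simp
    show "\<exists>N. \<forall>n\<ge>N. norm (X n) \<le> d + e n" using X(2) unfolding e_def by (auto intro: less_imp_le)
  qed
  thus ?thesis using qS dle by (meson order_trans)
qed

lemma balls_fip:
  fixes c :: "'i \<Rightarrow> 'a::{real_inner,complete_space}" and r :: "'i \<Rightarrow> real"
  assumes fin: "\<And>F. finite F \<Longrightarrow> F \<subseteq> I \<Longrightarrow> \<exists>w. \<forall>i\<in>F. norm (w - c i) \<le> r i"
  shows "\<exists>w. \<forall>i\<in>I. norm (w - c i) \<le> r i"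
proof (cases "I = {}")
  case True thus ?thesis by auto
next
  case False
  then obtain i0 where i0: "i0 \<in> I" by auto
  define S where "S F = {w. \<forall>i\<in>F. norm (w - c i) \<le> r i}" for F
  define FS where "FS = {F. finite F \<and> F \<subseteq> I}"
  have S_eq: "S F = (\<Inter>i\<in>F. cball (c i) (r i))" for F
    unfolding S_def by (auto simp: dist_norm norm_minus_commute)
  have S_closed: "closed (S F)" for F unfolding S_eq by (auto intro: closed_INT)
  have S_convex: "convex (S F)" for F unfolding S_eq by (auto intro: convex_INT)
  have Pex: "\<exists>q. q \<in> S F \<and> (\<forall>s\<in>S F. norm q \<le> norm s)" if "F \<in> FS" for F
  proof -
    have "S F \<noteq> {}" using fin that unfolding FS_def S_def by auto
    thus ?thesis using min_norm_exists[OF S_closed S_convex] by blast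
  qed
  define P where "P F = (SOME q. q \<in> S F \<and> (\<forall>s\<in>S F. norm q \<le> norm s))" for F
  have P: "P F \<in> S F" "\<And>s. s \<in> S F \<Longrightarrow> norm (P F) \<le> norm s" if "F \<in> FS" for F
    using someI_ex[OF Pex[OF that]] unfolding P_def by auto
  have anti: "F \<subseteq> G \<Longrightarrow> S G \<subseteq> S F" for F G unfolding S_def by auto
  have mono: "norm (P G - P F)^2 \<le> norm (P G)^2 - norm (P F)^2" "norm (P F) \<le> norm (P G)"
    if "F \<in> FS" "G \<in> FS" "F \<subseteq> G" for F G
  proof -
    have PG: "P G \<in> S F" using anti[OF that(3)] P(1)[OF that(2)] by auto
    show "norm (P F) \<le> norm (P G)" using P(2)[OF that(1) PG] .
    have "\<forall>s\<in>S F. norm (P F - 0) \<le> norm (s - 0)" using P(2)[OF that(1)] by simp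
    from nearest_var(2)[OF S_convex P(1)[OF that(1)] this PG]
    show "norm (P G - P F)^2 \<le> norm (P G)^2 - norm (P F)^2" by simp
  qed
  define B where "B = norm (c i0) + r i0"
  have bnd: "norm (P F) \<le> B" if "F \<in> FS" for F
  proof -
    have F': "insert i0 F \<in> FS" using that i0 unfolding FS_def by auto
    have "P (insert i0 F) \<in> S (insert i0 F)" using P(1)[OF F'] .
    hence "norm (P (insert i0 F) - c i0) \<le> r i0" unfolding S_def by auto
    hence "norm (P (insert i0 F)) \<le> B" unfolding B_def
      using norm_triangle_sub[of "P (insert i0 F)" "c i0"] by linarith
    thus ?thesis using mono(2)[OF that F' subset_insertI] by linarith
  qed
  define M where "M = (SUP F\<in>FS. norm (P F))"
  have FSne: "FS \<noteq> {}" unfolding FS_def by auto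
  have bddM: "bdd_above ((\<lambda>F. norm (P F)) ` FS)" by (rule bdd_aboveI2[where M=B], rule bnd)
  have leM: "norm (P F) \<le> M" if "F \<in> FS" for F unfolding M_def by (rule cSUP_upper[OF that bddM])
  define e where "e n = 1 / real (Suc n)" for n
  have e_pos: "0 < e n" for n unfolding e_def by auto
  have e0: "e \<longlonglongrightarrow> 0" unfolding e_def using LIMSEQ_inverse_real_of_nat
    by (simp add: inverse_eq_divide)
  have e_mono: "m \<ge> N \<Longrightarrow> e m \<le> e N" for m N unfolding e_def by (simp add: frac_le)
  have "\<exists>F\<in>FS. M - e n < norm (P F)" for n
    using less_cSUP_iff[OF FSne bddM, of "M - e n"] e_pos[of n] unfolding M_def by auto
  then obtain G where G: "\<And>n. G n \<in> FS" "\<And>n. M - e n < norm (P (G n))" by metis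
  define F where "F n = (\<Union>k\<le>n. G k)" for n
  have F_FS: "F n \<in> FS" for n using G(1) unfolding F_def FS_def by auto
  have F_mono: "m \<le> n \<Longrightarrow> F m \<subseteq> F n" for m n unfolding F_def by (auto intro: le_trans)
  have F_big: "M - e n < norm (P (F n))" for n
  proof -
    have "G n \<subseteq> F n" unfolding F_def by auto
    thus ?thesis using G(2)[of n] mono(2)[OF G(1) F_FS, of n n] by auto
  qed
  have M0: "0 \<le> M" using leM[OF F_FS[of 0]] norm_ge_zero[of "P (F 0)"] by linarith
  have BM: "M \<le> B" unfolding M_def using FSne bnd by (auto intro: cSUP_least)
  have est: "norm (P H - P (F n))^2 \<le> 2 * B * e n" if "H \<in> FS" "F n \<subseteq> H" for H n
  proof -
    have "norm (P H - P (F n))^2 \<le> norm (P H)^2 - norm (P (F n))^2"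
      using mono(1)[OF F_FS that(1) that(2)] .
    also have "\<dots> \<le> M^2 - norm (P (F n))^2" using leM[OF that(1)] by (simp add: power_mono)
    also have "\<dots> = (M - norm (P (F n))) * (M + norm (P (F n)))"
      by (simp add: power2_eq_square algebra_simps)
    also have "\<dots> \<le> e n * (2 * B)"
    proof (rule mult_mono)
      show "M - norm (P (F n)) \<le> e n" using F_big[of n] by simp
      show "M + norm (P (F n)) \<le> 2 * B" using leM[OF F_FS[of n]] BM by simp
      show "0 \<le> e n" using e_pos[of n] by simp
      show "0 \<le> M + norm (P (F n))" using M0 norm_ge_zero[of "P (F n)"] by linarith
    qed
    finally show ?thesis by (simp add: mult.commute mult.left_commute)
  qed
  define X where "X n = P (F n)" for n
  have "Cauchy X"
  proof (rule CauchyI)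
    fix r :: real assume r: "0 < r"
    have "(\<lambda>n. 2 * B * e n) \<longlonglongrightarrow> 2 * B * 0" by (intro tendsto_mult tendsto_const e0)
    hence "\<forall>\<^sub>F n in sequentially. 2 * B * e n < r^2" using r by (auto intro: order_tendstoD)
    then obtain N where N: "2 * B * e N < r^2" by (auto simp: eventually_sequentially)
    have B0: "0 \<le> B" using M0 BM by simp
    show "\<exists>M. \<forall>m\<ge>M. \<forall>n\<ge>M. norm (X m - X n) < r"
    proof (intro exI allI impI)
      fix m n assume mn: "N \<le> m" "N \<le> n"
      have "norm (X m - X n)^2 \<le> 2 * B * e N"
      proof (cases "n \<le> m")
        case True
        have "norm (X m - X n)^2 \<le> 2 * B * e n" unfolding X_def by (rule est[OF F_FS F_mono[OF True]])
        also have "\<dots> \<le> 2 * B * e N" using e_mono[OF mn(2)] B0 by (intro mult_left_mono) auto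
        finally show ?thesis .
      next
        case False
        have "norm (X n - X m)^2 \<le> 2 * B * e m" unfolding X_def
          by (rule est[OF F_FS F_mono]) (use False in simp)
        also have "\<dots> \<le> 2 * B * e N" using e_mono[OF mn(1)] B0 by (intro mult_left_mono) auto
        finally show ?thesis by (simp add: norm_minus_commute)
      qed
      hence "norm (X m - X n)^2 < r^2" using N by linarith
      thus "norm (X m - X n) < r" using r by (simp add: power_less_imp_less_base)
    qed
  qed
  then obtain L where L: "X \<longlonglongrightarrow> L" using Cauchy_convergent_iff convergent_def by blast
  have "\<forall>i\<in>I. norm (L - c i) \<le> r i"
  proof
    fix i assume i: "i \<in> I"
    define H where "H n = insert i (F n)" for n
    have H_FS: "H n \<in> FS" for n using F_FS i unfolding H_def FS_def by auto
    define Y where "Y n = P (H n)" for n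
    have "(\<lambda>n. Y n - X n) \<longlonglongrightarrow> 0"
    proof (rule Lim_null_comparison)
      show "\<forall>\<^sub>F n in sequentially. norm (Y n - X n) \<le> sqrt (2 * B * e n)"
      proof (intro always_eventually allI)
        fix n
        have "norm (Y n - X n)^2 \<le> 2 * B * e n" unfolding X_def Y_def
          by (rule est[OF H_FS]) (auto simp: H_def)
        thus "norm (Y n - X n) \<le> sqrt (2 * B * e n)" by (simp add: real_le_rsqrt)
      qed
      have "(\<lambda>n. sqrt (2 * B * e n)) \<longlonglongrightarrow> sqrt (2 * B * 0)"
        by (intro tendsto_real_sqrt tendsto_mult tendsto_const e0)
      thus "(\<lambda>n. sqrt (2 * B * e n)) \<longlonglongrightarrow> 0" by simp
    qed
    hence "(\<lambda>n. (Y n - X n) + X n) \<longlonglongrightarrow> 0 + L" by (intro tendsto_add L)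
    hence YL: "Y \<longlonglongrightarrow> L" by simp
    have "Y n \<in> cball (c i) (r i)" for n
    proof -
      have "Y n \<in> S (H n)" unfolding Y_def by (rule P(1)[OF H_FS])
      thus ?thesis unfolding S_def H_def by (auto simp: dist_norm norm_minus_commute)
    qed
    hence "L \<in> cball (c i) (r i)" using closed_sequentially[OF closed_cball _ YL] by blast
    thus "norm (L - c i) \<le> r i" by (simp add: dist_norm norm_minus_commute)
  qed
  thus ?thesis by blast
qed

lemma continuous_on_Max_fin:
  fixes f :: "'i \<Rightarrow> 'a::topological_space \<Rightarrow> real"
  assumes "finite F" "F \<noteq> {}" "\<And>i. i \<in> F \<Longrightarrow> continuous_on K (f i)"
  shows "continuous_on K (\<lambda>w. Max ((\<lambda>i. f i w) ` F))"
  using assms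
proof (induction F rule: finite_ne_induct)
  case (singleton x) thus ?case by simp
next
  case (insert x F)
  have "(\<lambda>w. Max ((\<lambda>i. f i w) ` insert x F)) = (\<lambda>w. max (f x w) (Max ((\<lambda>i. f i w) ` F)))"
    using insert by (auto simp: Max_insert)
  thus ?case using insert by (auto intro!: continuous_on_max)
qed

lemma var_identity:
  fixes a :: "'j \<Rightarrow> 'a::real_inner"
  assumes "sum \<mu> J = 1"
  shows "(\<Sum>x\<in>J. \<Sum>y\<in>J. \<mu> x * \<mu> y * norm (a x - a y)^2)
     = 2 * (\<Sum>x\<in>J. \<mu> x * norm (a x - v)^2) - 2 * norm (\<Sum>x\<in>J. \<mu> x *\<^sub>R (a x - v))^2"
proof -
  define b where "b x = a x - v" for x
  have ab: "a x - a y = b x - b y" for x y unfolding b_def by simp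
  have "(\<Sum>x\<in>J. \<Sum>y\<in>J. \<mu> x * \<mu> y * norm (a x - a y)^2)
     = (\<Sum>x\<in>J. \<Sum>y\<in>J. \<mu> x * norm (b x)^2 * \<mu> y + \<mu> y * norm (b y)^2 * \<mu> x
                          - 2 * (\<mu> x * \<mu> y * inner (b x) (b y)))"
    unfolding ab norm_diff_sq by (intro sum.cong refl) (simp add: algebra_simps)
  also have "\<dots> = (\<Sum>x\<in>J. \<mu> x * norm (b x)^2 * (\<Sum>y\<in>J. \<mu> y))
             + (\<Sum>x\<in>J. \<mu> x * (\<Sum>y\<in>J. \<mu> y * norm (b y)^2))
             - 2 * (\<Sum>x\<in>J. \<Sum>y\<in>J. \<mu> x * \<mu> y * inner (b x) (b y))"
    by (simp add: sum.distrib sum_subtractf sum_distrib_left sum_distrib_right mult.commute mult.left_commute)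
  also have "(\<Sum>x\<in>J. \<Sum>y\<in>J. \<mu> x * \<mu> y * inner (b x) (b y)) = norm (\<Sum>x\<in>J. \<mu> x *\<^sub>R b x)^2"
  proof -
    have "norm (\<Sum>x\<in>J. \<mu> x *\<^sub>R b x)^2 = (\<Sum>x\<in>J. \<Sum>y\<in>J. \<mu> x * (\<mu> y * inner (b y) (b x)))"
      by (simp add: power2_norm_eq_inner inner_sum_left inner_sum_right sum_distrib_left mult.assoc)
    also have "\<dots> = (\<Sum>y\<in>J. \<Sum>x\<in>J. \<mu> x * (\<mu> y * inner (b y) (b x)))"
      by (rule sum.swap)
    also have "\<dots> = (\<Sum>x\<in>J. \<Sum>y\<in>J. \<mu> x * \<mu> y * inner (b x) (b y))"
      by (intro sum.cong refl) (simp add: algebra_simps)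
    finally show ?thesis by simp
  qed
  finally show ?thesis using assms by (simp add: b_def sum_distrib_right[symmetric] mult.commute)
qed

lemma kirsz_finite:
  fixes c p :: "'i \<Rightarrow> 'a::real_inner"
  assumes finF: "finite F"
    and lip: "\<And>i j. i \<in> F \<Longrightarrow> j \<in> F \<Longrightarrow> norm (c i - c j) \<le> norm (p i - p j)"
  shows "\<exists>w. \<forall>i\<in>F. norm (w - c i) \<le> norm (z - p i)"
proof (cases "F = {} \<or> (\<exists>i\<in>F. z = p i)")
  case True
  then show ?thesis
  proof
    assume "F = {}" thus ?thesis by simp
  next
    assume "\<exists>i\<in>F. z = p i"
    then obtain i where i: "i \<in> F" "z = p i" by auto
    show ?thesis by (rule exI[of _ "c i"]) (use lip i in auto)
  qed
next
  case False
  hence Fne: "F \<noteq> {}" and rpos: "\<And>i. i \<in> F \<Longrightarrow> norm (z - p i) > 0" by auto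
  define r where "r i = norm (z - p i)" for i
  define K where "K = convex hull (c ` F)"
  have Kc: "compact K" unfolding K_def using finF by (simp add: finite_imp_compact_convex_hull)
  have Kne: "K \<noteq> {}" unfolding K_def using Fne by simp
  have Kcv: "convex K" unfolding K_def by simp
  define g where "g w = Max ((\<lambda>i. norm (w - c i) / r i) ` F)" for w
  have rne: "r i \<noteq> 0" if "i \<in> F" for i using rpos[OF that] unfolding r_def by simp
  have gc: "continuous_on K g" unfolding g_def
    by (rule continuous_on_Max_fin[OF finF Fne]) (auto intro!: continuous_intros simp: rne)
  obtain w0 where w0: "w0 \<in> K" "\<And>w. w \<in> K \<Longrightarrow> g w0 \<le> g w"
    using continuous_attains_inf[OF Kc Kne gc] by blast
  define lam where "lam = g w0"
  have le_lam: "norm (w0 - c i) / r i \<le> lam" if "i \<in> F" for i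
    unfolding lam_def g_def using finF that by (auto intro: Max_ge)
  have lam_le1: "lam \<le> 1"
  proof (rule ccontr)
    assume "\<not> lam \<le> 1"
    hence lam1: "lam > 1" by simp
    define A where "A = {i\<in>F. norm (w0 - c i) / r i = lam}"
    have "lam \<in> (\<lambda>i. norm (w0 - c i) / r i) ` F"
      unfolding lam_def g_def using finF Fne by (intro Max_in) auto
    hence Ane: "A \<noteq> {}" unfolding A_def by auto
    have AF: "A \<subseteq> F" unfolding A_def by auto
    have finA: "finite A" using finF AF finite_subset by blast
    have Aeq: "norm (w0 - c i) = lam * r i" if "i \<in> A" for i
      using that rpos[of i] unfolding A_def r_def by (auto simp: field_simps)
    have hull_in: "w0 \<in> convex hull (c ` A)"
    proof (rule ccontr)
      assume nin: "w0 \<notin> convex hull (c ` A)"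
      define H where "H = convex hull (c ` A)"
      have Hc: "compact H" unfolding H_def using finA by (simp add: finite_imp_compact_convex_hull)
      have Hne: "H \<noteq> {}" unfolding H_def using Ane by simp
      have "\<exists>q\<in>H. \<forall>s\<in>H. norm (q - w0) \<le> norm (s - w0)"
        by (rule continuous_attains_inf[OF Hc Hne]) (auto intro!: continuous_intros)
      then obtain q where q: "q \<in> H" "\<And>s. s \<in> H \<Longrightarrow> norm (q - w0) \<le> norm (s - w0)"
        by blast
      have qw: "q \<noteq> w0" using q(1) nin unfolding H_def by auto
      define dd where "dd = norm (q - w0)"
      have dpos: "dd > 0" using qw unfolding dd_def by simp
      have HK: "H \<subseteq> K" unfolding H_def K_def using AF by (intro hull_mono image_mono)
      define wt where "wt t = w0 + t *\<^sub>R (q - w0)" for t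
      have act: "norm (wt t - c i) < lam * r i" if t: "0 < t" "t \<le> 1" and i: "i \<in> A" for t i
      proof -
        have ciH: "c i \<in> H" unfolding H_def using i by (simp add: hull_inc)
        have var: "inner (w0 - q) (c i - q) \<le> 0"
          using nearest_var(1)[of H q w0 "c i"] q ciH unfolding H_def by auto
        have "inner (w0 - c i) (q - w0) = - (dd^2) + inner (c i - q) (w0 - q)"
          unfolding dd_def by (simp add: power2_norm_eq_inner inner_diff_left inner_diff_right inner_commute)
        also have "\<dots> \<le> - (dd^2)" using var by (simp add: inner_commute)
        finally have ip: "inner (w0 - c i) (q - w0) \<le> - (dd^2)" .
        have "norm (wt t - c i)^2 = norm ((w0 - c i) + t *\<^sub>R (q - w0))^2"
          unfolding wt_def by (simp add: algebra_simps)
        also have "\<dots> = norm (w0 - c i)^2 + 2 * t * inner (w0 - c i) (q - w0) + t^2 * dd^2"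
          unfolding norm_add_sq dd_def by (simp add: power_mult_distrib)
        also have "\<dots> \<le> norm (w0 - c i)^2 - 2 * t * dd^2 + t^2 * dd^2"
        proof -
          have "t * inner (w0 - c i) (q - w0) \<le> t * (- (dd^2))" using ip t by (intro mult_left_mono) auto
          thus ?thesis by simp
        qed
        also have "\<dots> < norm (w0 - c i)^2"
        proof -
          have "t * dd^2 < 2 * dd^2" using t dpos by (simp add: mult_strict_right_mono)
          hence "t * (t * dd^2) < t * (2 * dd^2)" using t by simp
          thus ?thesis by (simp add: power2_eq_square algebra_simps)
        qed
        finally have "norm (wt t - c i)^2 < (lam * r i)^2" using Aeq[OF i] by simp
        moreover have "0 \<le> lam * r i" using lam1 rpos[of i] AF i unfolding r_def by simp
        ultimately show ?thesis by (rule power_less_imp_less_base)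
      qed
      have "\<forall>\<^sub>F t in at_right 0. \<forall>j\<in>F - A. norm (wt t - c j) < lam * r j"
      proof (rule eventually_ball_finite)
        show "finite (F - A)" using finF by simp
        show "\<forall>j\<in>F - A. \<forall>\<^sub>F t in at_right 0. norm (wt t - c j) < lam * r j"
        proof
          fix j assume j: "j \<in> F - A"
          have "norm (w0 - c j) / r j < lam" using le_lam[of j] j unfolding A_def by auto
          hence lt: "norm (w0 - c j) < lam * r j" using rpos[of j] j unfolding r_def
            by (simp add: field_simps)
          have "((\<lambda>t. norm (wt t - c j)) \<longlongrightarrow> norm (wt 0 - c j)) (at_right 0)"
            unfolding wt_def by (intro tendsto_intros)
          hence "((\<lambda>t. norm (wt t - c j)) \<longlongrightarrow> norm (w0 - c j)) (at_right 0)"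
            unfolding wt_def by simp
          thus "\<forall>\<^sub>F t in at_right 0. norm (wt t - c j) < lam * r j"
            using lt by (rule order_tendstoD)
        qed
      qed
      moreover have "\<forall>\<^sub>F t in at_right (0::real). 0 < t \<and> t \<le> 1"
        using eventually_at_right_real[of 0 1] by (rule eventually_mono) auto
      ultimately have "\<forall>\<^sub>F t in at_right (0::real). (\<forall>j\<in>F - A. norm (wt t - c j) < lam * r j) \<and> (0 < t \<and> t \<le> 1)"
        by (rule eventually_conj)
      then obtain t where t: "0 < t" "t \<le> 1" "\<forall>j\<in>F - A. norm (wt t - c j) < lam * r j"
        using eventually_happens'[OF trivial_limit_at_right_real] by blast
      have wtK: "wt t \<in> K"
      proof -
        have "(1 - t) *\<^sub>R w0 + t *\<^sub>R q \<in> K" using convexD[OF Kcv w0(1), of q "1 - t" t] q(1) HK t by auto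
        thus ?thesis unfolding wt_def by (simp add: algebra_simps)
      qed
      have "g (wt t) < lam" unfolding g_def
      proof (subst Max_less_iff)
        show "finite ((\<lambda>i. norm (wt t - c i) / r i) ` F)" using finF by simp
        show "(\<lambda>i. norm (wt t - c i) / r i) ` F \<noteq> {}" using Fne by simp
        show "\<forall>a\<in>(\<lambda>i. norm (wt t - c i) / r i) ` F. a < lam"
        proof
          fix a assume "a \<in> (\<lambda>i. norm (wt t - c i) / r i) ` F"
          then obtain i where i: "i \<in> F" "a = norm (wt t - c i) / r i" by auto
          have "norm (wt t - c i) < lam * r i"
            using act[OF t(1,2), of i] t(3) i by (cases "i \<in> A") auto
          thus "a < lam" using i rpos[of i] unfolding r_def by (simp add: pos_divide_less_eq)
        qed
      qed
      thus False using w0(2)[OF wtK] unfolding lam_def by simp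
    qed
    define C where "C = c ` A"
    have finC: "finite C" unfolding C_def using finA by simp
    obtain u where u: "\<forall>x\<in>C. 0 \<le> u x" "sum u C = 1" "(\<Sum>x\<in>C. u x *\<^sub>R x) = w0"
      using hull_in unfolding C_def[symmetric] convex_hull_finite[OF finC] by blast
    define idx where "idx x = (SOME i. i \<in> A \<and> c i = x)" for x
    have idx: "idx x \<in> A" "c (idx x) = x" if "x \<in> C" for x
    proof -
      have "\<exists>i. i \<in> A \<and> c i = x" using that unfolding C_def by auto
      from someI_ex[OF this] show "idx x \<in> A" "c (idx x) = x" unfolding idx_def by auto
    qed
    define P where "P x = p (idx x)" for x
    define R where "R x = r (idx x)" for x
    have Rpos: "R x > 0" if "x \<in> C" for x
      using rpos[of "idx x"] idx(1)[OF that] AF unfolding R_def r_def by auto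
    have lipC: "norm (x - y) \<le> norm (P x - P y)" if "x \<in> C" "y \<in> C" for x y
      using lip[of "idx x" "idx y"] idx[OF that(1)] idx[OF that(2)] AF unfolding P_def by auto
    have distC: "norm (x - w0) = lam * R x" if "x \<in> C" for x
      using Aeq[OF idx(1)[OF that]] idx(2)[OF that] unfolding R_def by (simp add: norm_minus_commute)
    have PR: "norm (P x - z) = R x" if "x \<in> C" for x
      unfolding P_def R_def r_def by (simp add: norm_minus_commute)
    have zero: "(\<Sum>x\<in>C. u x *\<^sub>R (x - w0)) = 0"
      using u(2,3) by (simp add: scaleR_diff_right sum_subtractf flip: scaleR_sum_left)
    have "(\<Sum>x\<in>C. \<Sum>y\<in>C. u x * u y * norm (x - y)^2) = 2 * (\<Sum>x\<in>C. u x * norm (x - w0)^2)"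
      using var_identity[of u C "\<lambda>x. x" w0] u(2) zero by simp
    also have "\<dots> = 2 * (\<Sum>x\<in>C. lam^2 * (u x * (R x)^2))"
    proof -
      have "(\<Sum>x\<in>C. u x * norm (x - w0)^2) = (\<Sum>x\<in>C. lam^2 * (u x * (R x)^2))"
      proof (rule sum.cong[OF refl])
        fix x assume "x \<in> C"
        thus "u x * norm (x - w0)^2 = lam^2 * (u x * (R x)^2)"
          using distC[of x] by (simp add: power_mult_distrib)
      qed
      thus ?thesis by simp
    qed
    also have "\<dots> = lam^2 * (2 * (\<Sum>x\<in>C. u x * (R x)^2))"
      by (simp add: sum_distrib_left[symmetric])
    finally have eq1: "(\<Sum>x\<in>C. \<Sum>y\<in>C. u x * u y * norm (x - y)^2) = lam^2 * (2 * (\<Sum>x\<in>C. u x * (R x)^2))" .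
    have "(\<Sum>x\<in>C. \<Sum>y\<in>C. u x * u y * norm (x - y)^2) \<le> (\<Sum>x\<in>C. \<Sum>y\<in>C. u x * u y * norm (P x - P y)^2)"
      using u(1) lipC by (intro sum_mono mult_left_mono power_mono) auto
    also have "\<dots> = 2 * (\<Sum>x\<in>C. u x * norm (P x - z)^2) - 2 * norm (\<Sum>x\<in>C. u x *\<^sub>R (P x - z))^2"
      by (rule var_identity[OF u(2)])
    also have "\<dots> \<le> 2 * (\<Sum>x\<in>C. u x * (R x)^2)"
    proof -
      have "(\<Sum>x\<in>C. u x * norm (P x - z)^2) = (\<Sum>x\<in>C. u x * (R x)^2)"
        by (rule sum.cong[OF refl]) (simp add: PR)
      thus ?thesis by simp
    qed
    finally have ineq: "lam^2 * (2 * (\<Sum>x\<in>C. u x * (R x)^2)) \<le> 2 * (\<Sum>x\<in>C. u x * (R x)^2)"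
      using eq1 by simp
    have "\<exists>x\<in>C. u x \<noteq> 0" using u(2) by (metis sum.neutral zero_neq_one)
    then obtain x0 where x0: "x0 \<in> C" "u x0 > 0" using u(1) by (auto simp: less_le)
    have "0 < u x0 * (R x0)^2" using x0 Rpos[OF x0(1)] by simp
    also have "\<dots> \<le> (\<Sum>x\<in>C. u x * (R x)^2)"
      using u(1) x0(1) finC by (intro member_le_sum) auto
    finally have T: "0 < (\<Sum>x\<in>C. u x * (R x)^2)" .
    have "lam^2 * (2 * (\<Sum>x\<in>C. u x * (R x)^2)) \<le> 1 * (2 * (\<Sum>x\<in>C. u x * (R x)^2))"
      using ineq by simp
    hence "lam^2 \<le> 1" using T by (simp only: mult_le_cancel_right)
    moreover have "1 < lam^2" using lam1 by (simp add: one_less_power)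
    ultimately show False by simp
  qed
  show ?thesis
  proof (intro exI ballI)
    fix i assume i: "i \<in> F"
    have "norm (w0 - c i) / r i \<le> 1" using le_lam[OF i] lam_le1 by simp
    thus "norm (w0 - c i) \<le> norm (z - p i)" using rpos[OF i] unfolding r_def by (simp add: field_simps)
  qed
qed

lemma kirsz_hilbert:
  fixes c p :: "'i \<Rightarrow> 'a::{real_inner,complete_space}"
  assumes lip: "\<And>i j. i \<in> I \<Longrightarrow> j \<in> I \<Longrightarrow> norm (c i - c j) \<le> norm (p i - p j)"
  shows "\<exists>w. \<forall>i\<in>I. norm (w - c i) \<le> norm (z - p i)"
proof (rule balls_fip)
  fix F assume "finite F" "F \<subseteq> I"
  thus "\<exists>w. \<forall>i\<in>F. norm (w - c i) \<le> norm (z - p i)"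
    using kirsz_finite[of F c p z] lip by blast
qed

lemma half_sum_diff_inner:
  fixes X Y :: "'a::real_inner"
  shows "inner ((1/2) *\<^sub>R (X + Y)) ((1/2) *\<^sub>R (X - Y)) = (norm X^2 - norm Y^2) / 4"
  by (simp add: inner_add_left inner_diff_right power2_norm_eq_inner inner_commute algebra_simps)

lemma halves_scaleR: "(1/2) *\<^sub>R a + (1/2) *\<^sub>R a = (a::'a::real_vector)"
  by (simp flip: scaleR_add_left)

lemma minty:
  fixes A :: "'a::{real_inner,complete_space} \<Rightarrow> 'a set"
  assumes mm: "maximal_monotone A" and lam: "lam > 0"
  shows "\<exists>y. \<exists>u\<in>A y. z = y + lam *\<^sub>R u"
proof -
  have mon: "monotone_op A" using mm unfolding maximal_monotone_def by simp
  define I where "I = {(a, u). u \<in> A a}"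
  define c where "c i = fst i - lam *\<^sub>R snd i" for i :: "'a \<times> 'a"
  define p where "p i = fst i + lam *\<^sub>R snd i" for i :: "'a \<times> 'a"
  have lip: "norm (c i - c j) \<le> norm (p i - p j)" if "i \<in> I" "j \<in> I" for i j
  proof -
    obtain a u where i: "i = (a, u)" by (cases i)
    obtain b v where j: "j = (b, v)" by (cases j)
    have iu: "u \<in> A a" using that(1) i unfolding I_def by auto
    have jv: "v \<in> A b" using that(2) j unfolding I_def by auto
    have ip: "inner (a - b) (u - v) \<ge> 0" using mon iu jv unfolding monotone_op_def by blast
    have ceq: "c i - c j = (a - b) - lam *\<^sub>R (u - v)" unfolding c_def i j by (simp add: algebra_simps)
    have peq: "p i - p j = (a - b) + lam *\<^sub>R (u - v)" unfolding p_def i j by (simp add: algebra_simps)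
    have "norm (c i - c j)^2 = norm (p i - p j)^2 - 4 * lam * inner (a - b) (u - v)"
      unfolding ceq peq norm_diff_sq norm_add_sq by simp
    also have "\<dots> \<le> norm (p i - p j)^2" using ip lam by simp
    finally show ?thesis by (rule power2_le_imp_le) simp
  qed
  obtain w where w: "\<And>i. i \<in> I \<Longrightarrow> norm (w - c i) \<le> norm (z - p i)"
    using kirsz_hilbert[of I c p z] lip by blast
  define y where "y = (1/2) *\<^sub>R (z + w)"
  define v where "v = (1/2) *\<^sub>R (z - w)"
  define u0 where "u0 = (1/lam) *\<^sub>R v"
  have key: "inner (y - a) (u0 - u) \<ge> 0" if "u \<in> A a" for a u
  proof -
    have pc: "(z - p (a,u)) + (w - c (a,u)) = (z + w) - 2 *\<^sub>R a"
      unfolding p_def c_def by (simp add: algebra_simps scaleR_2)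
    have yi: "y - a = (1/2) *\<^sub>R ((z - p (a,u)) + (w - c (a,u)))"
      unfolding pc y_def by (simp add: scaleR_diff_right)
    have pc2: "(z - p (a,u)) - (w - c (a,u)) = (z - w) - (lam *\<^sub>R u + lam *\<^sub>R u)"
      unfolding p_def c_def by (simp add: algebra_simps)
    have "(1/2) *\<^sub>R ((z - w) - (lam *\<^sub>R u + lam *\<^sub>R u))
        = (1/2) *\<^sub>R (z - w) - ((1/2) *\<^sub>R (lam *\<^sub>R u) + (1/2) *\<^sub>R (lam *\<^sub>R u))"
      by (simp only: scaleR_diff_right scaleR_add_right)
    also have "\<dots> = v - lam *\<^sub>R u" by (simp only: halves_scaleR v_def)
    finally have vi: "v - lam *\<^sub>R u = (1/2) *\<^sub>R ((z - p (a,u)) - (w - c (a,u)))"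
      unfolding pc2 by simp
    have "inner (y - a) (v - lam *\<^sub>R u) = (norm (z - p (a,u))^2 - norm (w - c (a,u))^2) / 4"
      unfolding yi vi by (rule half_sum_diff_inner)
    also have "\<dots> \<ge> 0"
    proof -
      have "norm (w - c (a,u)) \<le> norm (z - p (a,u))" using w[of "(a,u)"] that unfolding I_def by auto
      hence "norm (w - c (a,u))^2 \<le> norm (z - p (a,u))^2" by (simp add: power_mono)
      thus ?thesis by simp
    qed
    finally have "0 \<le> inner (y - a) (v - lam *\<^sub>R u)" .
    moreover have "v - lam *\<^sub>R u = lam *\<^sub>R (u0 - u)" unfolding u0_def using lam
      by (simp add: algebra_simps)
    ultimately have "0 \<le> lam * inner (y - a) (u0 - u)" by simp
    thus ?thesis using lam by (simp add: zero_le_mult_iff)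
  qed
  define A' where "A' x = (if x = y then insert u0 (A y) else A x)" for x
  have memA': "u \<in> A' x \<longleftrightarrow> u \<in> A x \<or> (x = y \<and> u = u0)" for x u
    unfolding A'_def by auto
  have "monotone_op A'"
    unfolding monotone_op_def
  proof (intro allI impI)
    fix x x' u u' assume h: "u \<in> A' x" "u' \<in> A' x'"
    show "inner (x - x') (u - u') \<ge> 0"
    proof (cases "u \<in> A x")
      case True
      show ?thesis
      proof (cases "u' \<in> A x'")
        case True
        thus ?thesis using \<open>u \<in> A x\<close> mon unfolding monotone_op_def by blast
      next
        case False
        hence "x' = y" "u' = u0" using h(2) memA' by auto
        moreover have "inner (x - x') (u - u') = inner (x' - x) (u' - u)"
          by (simp add: inner_diff_left inner_diff_right algebra_simps)
        ultimately show ?thesis using key[OF True] by simp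
      qed
    next
      case False
      hence xy: "x = y" "u = u0" using h(1) memA' by auto
      show ?thesis
      proof (cases "u' \<in> A x'")
        case True
        thus ?thesis using key[OF True] xy by simp
      next
        case False
        hence "x' = y" "u' = u0" using h(2) memA' by auto
        thus ?thesis using xy by simp
      qed
    qed
  qed
  moreover have "\<forall>x. A x \<subseteq> A' x" unfolding A'_def by auto
  ultimately have "A' = A" using mm unfolding maximal_monotone_def by blast
  hence "u0 \<in> A y" using memA'[of u0 y] by simp
  moreover have "z = y + lam *\<^sub>R u0"
  proof -
    have "lam *\<^sub>R u0 = v" unfolding u0_def using lam by simp
    moreover have "y + v = z" unfolding y_def v_def
      by (simp add: scaleR_add_right scaleR_diff_right algebra_simps halves_scaleR)
    ultimately show ?thesis by simp
  qed
  ultimately show ?thesis by blast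
qed

lemma resolvent_unique_aux:
  fixes A :: "'a::real_inner \<Rightarrow> 'a set"
  assumes mon: "monotone_op A" and lam: "lam > 0"
    and "u \<in> A y" "x = y + lam *\<^sub>R u" "u' \<in> A y'" "x = y' + lam *\<^sub>R u'"
  shows "y = y'"
proof -
  have ip: "inner (y - y') (u - u') \<ge> 0" using mon assms(3,5) unfolding monotone_op_def by blast
  have e: "lam *\<^sub>R (u - u') = y' - y" using assms(4,6) by (simp add: algebra_simps)
  have "u - u' = (1/lam) *\<^sub>R (lam *\<^sub>R (u - u'))" using lam by simp
  hence "u - u' = (1/lam) *\<^sub>R (y' - y)" unfolding e .
  moreover have "y' - y = - (y - y')" by simp
  ultimately have "inner (y - y') (u - u') = - (1/lam) * norm (y - y')^2"
    by (simp only: inner_scaleR_right inner_minus_right power2_norm_eq_inner)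
  hence "norm (y - y')^2 / lam \<le> 0" using ip lam by simp
  hence "norm (y - y')^2 \<le> 0" using lam by (simp add: divide_le_0_iff)
  thus ?thesis by simp
qed

definition "Jr A lam x = resolvent A lam x"

lemma resolvent_prop:
  fixes A :: "'a::{real_inner,complete_space} \<Rightarrow> 'a set"
  assumes mm: "maximal_monotone A" and lam: "lam > 0"
  shows "(1/lam) *\<^sub>R (x - resolvent A lam x) \<in> A (resolvent A lam x)"
    and "\<And>y u. u \<in> A y \<Longrightarrow> x = y + lam *\<^sub>R u \<Longrightarrow> resolvent A lam x = y"
proof -
  have mon: "monotone_op A" using mm unfolding maximal_monotone_def by simp
  obtain y u where yu: "u \<in> A y" "x = y + lam *\<^sub>R u" using minty[OF mm lam, of x] by blast
  have eq: "resolvent A lam x = y" unfolding resolvent_def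
  proof (rule the_equality)
    show "\<exists>u\<in>A y. x = y + lam *\<^sub>R u" using yu by blast
    fix y' assume "\<exists>u\<in>A y'. x = y' + lam *\<^sub>R u"
    then obtain u' where "u' \<in> A y'" "x = y' + lam *\<^sub>R u'" by blast
    thus "y' = y" using resolvent_unique_aux[OF mon lam yu] by metis
  qed
  have "(1/lam) *\<^sub>R (x - y) = u" using yu(2) lam by (simp add: algebra_simps)
  thus "(1/lam) *\<^sub>R (x - resolvent A lam x) \<in> A (resolvent A lam x)" using eq yu(1) by simp
  fix y' u' assume "u' \<in> A y'" "x = y' + lam *\<^sub>R u'"
  thus "resolvent A lam x = y'" using resolvent_unique_aux[OF mon lam yu] eq by metis
qed

lemma sq_cancel:
  fixes N R :: real
  assumes "N * N \<le> N * R" "0 \<le> N" "0 \<le> R"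
  shows "N \<le> R"
proof (cases "N = 0")
  case True thus ?thesis using assms by simp
next
  case False
  hence "N > 0" using assms by simp
  thus ?thesis using assms(1) by (simp add: mult_le_cancel_left_pos)
qed

context
  fixes A :: "'a::{real_inner,complete_space} \<Rightarrow> 'a set"
  assumes mm: "maximal_monotone A"
begin

lemma mon: "monotone_op A" using mm unfolding maximal_monotone_def by simp

lemma J_in: "lam > 0 \<Longrightarrow> (1/lam) *\<^sub>R (x - resolvent A lam x) \<in> A (resolvent A lam x)"
  using resolvent_prop(1)[OF mm] by blast

lemma J_eq: "lam > 0 \<Longrightarrow> u \<in> A y \<Longrightarrow> x = y + lam *\<^sub>R u \<Longrightarrow> resolvent A lam x = y"
  using resolvent_prop(2)[OF mm] by blast

lemma J_firm:
  assumes lam: "lam > 0"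
  shows "norm (resolvent A lam x - resolvent A lam y)^2
          \<le> inner (resolvent A lam x - resolvent A lam y) (x - y)"
proof -
  define a where "a = resolvent A lam x"
  define b where "b = resolvent A lam y"
  have "inner (a - b) ((1/lam) *\<^sub>R (x - a) - (1/lam) *\<^sub>R (y - b)) \<ge> 0"
    using mon J_in[OF lam, of x] J_in[OF lam, of y] unfolding monotone_op_def a_def b_def by blast
  hence "(1/lam) * inner (a - b) ((x - y) - (a - b)) \<ge> 0"
    by (simp add: algebra_simps inner_diff_right)
  hence "inner (a - b) ((x - y) - (a - b)) \<ge> 0" using lam by (simp add: zero_le_divide_iff)
  thus ?thesis unfolding a_def[symmetric] b_def[symmetric]
    by (simp add: inner_diff_right power2_norm_eq_inner)
qed

lemma J_nonexp:
  assumes lam: "lam > 0"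
  shows "norm (resolvent A lam x - resolvent A lam y) \<le> norm (x - y)"
proof -
  define d where "d = resolvent A lam x - resolvent A lam y"
  have "norm d^2 \<le> inner d (x - y)" unfolding d_def by (rule J_firm[OF lam])
  also have "\<dots> \<le> norm d * norm (x - y)" by (rule norm_cauchy_schwarz)
  finally have "norm d * norm d \<le> norm d * norm (x - y)" by (simp add: power2_eq_square)
  thus ?thesis unfolding d_def[symmetric]
    by (rule sq_cancel) auto
qed

lemma IJ_nonexp:
  assumes lam: "lam > 0"
  shows "norm ((x - resolvent A lam x) - (y - resolvent A lam y)) \<le> norm (x - y)"
proof -
  define d where "d = resolvent A lam x - resolvent A lam y"
  have f: "norm d^2 \<le> inner d (x - y)" unfolding d_def by (rule J_firm[OF lam])
  have eq: "(x - resolvent A lam x) - (y - resolvent A lam y) = (x - y) - d" unfolding d_def by simp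
  have "norm ((x - resolvent A lam x) - (y - resolvent A lam y))^2 = norm (x - y)^2 - 2 * inner (x - y) d + norm d^2"
    unfolding eq by (rule norm_diff_sq)
  also have "\<dots> \<le> norm (x - y)^2"
  proof -
    have "0 \<le> norm d^2" by simp
    moreover have "inner (x - y) d = inner d (x - y)" by (rule inner_commute)
    ultimately show ?thesis using f by linarith
  qed
  finally show ?thesis by (rule power2_le_imp_le) simp
qed

lemma J_fix: "lam > 0 \<Longrightarrow> 0 \<in> A e \<Longrightarrow> resolvent A lam e = e"
  using J_eq[of lam 0 e e] by simp

lemma J_fix_iff: "lam > 0 \<Longrightarrow> resolvent A lam x = x \<longleftrightarrow> 0 \<in> A x"
  using J_in[of lam x] J_fix[of lam x] by auto

lemma dist_le_zero:
  assumes lam: "lam > 0" and e: "0 \<in> A e"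
  shows "norm (x - resolvent A lam x) \<le> norm (x - e)"
  using IJ_nonexp[OF lam, of x e] J_fix[OF lam e] by simp

lemma J_lam:
  assumes lam: "lam > 0" and mu: "mu > 0"
  shows "norm (resolvent A lam x - resolvent A mu x) \<le> \<bar>mu - lam\<bar> / mu * norm (x - resolvent A mu x)"
proof -
  define y where "y = resolvent A lam x"
  define y' where "y' = resolvent A mu x"
  have "inner (y - y') ((1/lam) *\<^sub>R (x - y) - (1/mu) *\<^sub>R (x - y')) \<ge> 0"
    using mon J_in[OF lam, of x] J_in[OF mu, of x] unfolding monotone_op_def y_def y'_def by blast
  moreover have "(1/lam) *\<^sub>R (x - y) - (1/mu) *\<^sub>R (x - y') = (1/lam) *\<^sub>R (y' - y) + (1/lam - 1/mu) *\<^sub>R (x - y')"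
    by (simp add: algebra_simps)
  ultimately have "0 \<le> (1/lam) * inner (y - y') (y' - y) + (1/lam - 1/mu) * inner (y - y') (x - y')"
    by (simp add: inner_add_right)
  moreover have "inner (y - y') (y' - y) = - (norm (y - y')^2)"
    by (simp add: power2_norm_eq_inner inner_diff_left inner_diff_right inner_commute)
  ultimately have "(1/lam) * norm (y - y')^2 \<le> (1/lam - 1/mu) * inner (y - y') (x - y')" by simp
  hence "lam * ((1/lam) * norm (y - y')^2) \<le> lam * ((1/lam - 1/mu) * inner (y - y') (x - y'))"
    using lam by (intro mult_left_mono) auto
  moreover have "lam * ((1/lam) * N) = N" for N :: real using lam by simp
  moreover have "lam * ((1/lam - 1/mu) * I) = ((mu - lam) / mu) * I" for I :: real
    using lam mu by (simp add: field_simps)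
  ultimately have "norm (y - y')^2 \<le> ((mu - lam) / mu) * inner (y - y') (x - y')"
    by metis
  also have "\<dots> \<le> \<bar>(mu - lam) / mu\<bar> * \<bar>inner (y - y') (x - y')\<bar>"
    by (metis abs_ge_self abs_mult)
  also have "\<dots> \<le> \<bar>(mu - lam) / mu\<bar> * (norm (y - y') * norm (x - y'))"
    by (intro mult_left_mono Cauchy_Schwarz_ineq2) auto
  finally have "norm (y - y') * norm (y - y') \<le> norm (y - y') * (\<bar>mu - lam\<bar> / mu * norm (x - y'))"
    using mu by (simp add: power2_eq_square abs_div algebra_simps)
  thus ?thesis unfolding y_def[symmetric] y'_def[symmetric]
    by (rule sq_cancel) (use mu in auto)
qed

lemma dist_mono:
  assumes lam: "lam > 0" and le: "lam \<le> mu"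
  shows "norm (x - resolvent A lam x) \<le> norm (x - resolvent A mu x)"
proof -
  have mu: "mu > 0" using lam le by simp
  define a where "a = x - resolvent A lam x"
  define b where "b = x - resolvent A mu x"
  have "inner (b - a) ((1/lam) *\<^sub>R a - (1/mu) *\<^sub>R b) \<ge> 0"
  proof -
    have "inner (resolvent A lam x - resolvent A mu x) ((1/lam) *\<^sub>R (x - resolvent A lam x) - (1/mu) *\<^sub>R (x - resolvent A mu x)) \<ge> 0"
      using mon J_in[OF lam, of x] J_in[OF mu, of x] unfolding monotone_op_def by blast
    moreover have "resolvent A lam x - resolvent A mu x = b - a" unfolding a_def b_def by simp
    ultimately show ?thesis unfolding a_def[symmetric] b_def[symmetric] by simp
  qed
  hence "0 \<le> (1/lam) * inner b a - (1/mu) * inner b b - (1/lam) * inner a a + (1/mu) * inner a b"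
    by (simp add: inner_diff_left inner_diff_right algebra_simps)
  hence ineq: "(1/lam) * norm a^2 + (1/mu) * norm b^2 \<le> (1/lam + 1/mu) * inner a b"
    by (simp add: power2_norm_eq_inner inner_commute algebra_simps)
  have "inner a b \<le> norm a * norm b" by (rule norm_cauchy_schwarz)
  hence "(1/lam + 1/mu) * inner a b \<le> (1/lam + 1/mu) * (norm a * norm b)"
    using lam mu by (intro mult_left_mono) auto
  with ineq have "(1/lam) * norm a^2 + (1/mu) * norm b^2 \<le> (1/lam + 1/mu) * (norm a * norm b)" by simp
  hence "lam * mu * ((1/lam) * norm a^2 + (1/mu) * norm b^2) \<le> lam * mu * ((1/lam + 1/mu) * (norm a * norm b))"
    using lam mu by (intro mult_left_mono) auto
  moreover have "lam * mu * ((1/lam) * A2 + (1/mu) * B2) = mu * A2 + lam * B2" for A2 B2 :: real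
    using lam mu by (simp add: field_simps)
  moreover have "lam * mu * ((1/lam + 1/mu) * P) = (mu + lam) * P" for P :: real
    using lam mu by (simp add: field_simps)
  ultimately have key: "mu * norm a^2 + lam * norm b^2 \<le> (mu + lam) * (norm a * norm b)"
    by simp
  show ?thesis unfolding a_def[symmetric] b_def[symmetric]
  proof (rule ccontr)
    assume "\<not> norm a \<le> norm b"
    hence gt: "norm a > norm b" by simp
    have p1: "norm a - norm b > 0" using gt by simp
    have "mu * norm a \<ge> lam * norm a" using le by (intro mult_right_mono) auto
    moreover have "lam * norm a > lam * norm b" using gt lam by simp
    ultimately have p2: "mu * norm a - lam * norm b > 0" by simp
    have "(norm a - norm b) * (mu * norm a - lam * norm b) > 0" using p1 p2 by simp
    moreover have "(norm a - norm b) * (mu * norm a - lam * norm b)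
        = mu * norm a^2 + lam * norm b^2 - (mu + lam) * (norm a * norm b)"
      by (simp add: power2_eq_square algebra_simps)
    ultimately show False using key by simp
  qed
qed

end

definition dd :: "('a::real_inner \<Rightarrow> 'a set) \<Rightarrow> real \<Rightarrow> 'a \<Rightarrow> real" where
  "dd A l x = norm (x - resolvent A l x)"

definition LamF :: "('a::real_inner \<Rightarrow> 'a set) \<Rightarrow> real \<Rightarrow> nat \<Rightarrow> 'a \<Rightarrow> real" where
  "LamF A \<theta> n x = (THE l. l > 0 \<and> l * dd A l x ^ n = \<theta>)"

context
  fixes A :: "'a::{real_inner,complete_space} \<Rightarrow> 'a set" and \<theta> :: real and n :: nat and e :: 'a
  assumes mm: "maximal_monotone A" and th: "\<theta> > 0" and e: "0 \<in> A e"
begin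

lemma dd_pos: "l > 0 \<Longrightarrow> 0 \<notin> A x \<Longrightarrow> dd A l x > 0"
  unfolding dd_def using J_fix_iff[OF mm, of l x] by auto

lemma dd_zero: "l > 0 \<Longrightarrow> 0 \<in> A x \<Longrightarrow> dd A l x = 0"
  unfolding dd_def using J_fix_iff[OF mm, of l x] by auto

lemma dd_le_e: "l > 0 \<Longrightarrow> dd A l x \<le> norm (x - e)"
  unfolding dd_def by (rule dist_le_zero[OF mm _ e])

lemma dd_mono: "0 < l \<Longrightarrow> l \<le> m \<Longrightarrow> dd A l x \<le> dd A m x"
  unfolding dd_def by (rule dist_mono[OF mm])

lemma dd_lip_x: "l > 0 \<Longrightarrow> \<bar>dd A l x - dd A l y\<bar> \<le> norm (x - y)"
proof -
  assume l: "l > 0"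
  have "\<bar>dd A l x - dd A l y\<bar> \<le> norm ((x - resolvent A l x) - (y - resolvent A l y))"
    unfolding dd_def by (rule norm_triangle_ineq3)
  also have "\<dots> \<le> norm (x - y)" by (rule IJ_nonexp[OF mm l])
  finally show ?thesis .
qed

lemma dd_lip_l:
  assumes a: "a > 0" and l: "l \<ge> a" and m: "m \<ge> a"
  shows "\<bar>dd A l x - dd A m x\<bar> \<le> norm (x - e) / a * \<bar>l - m\<bar>"
proof -
  have l0: "l > 0" and m0: "m > 0" using a l m by auto
  have "\<bar>dd A l x - dd A m x\<bar> \<le> norm ((x - resolvent A l x) - (x - resolvent A m x))"
    unfolding dd_def by (rule norm_triangle_ineq3)
  also have "\<dots> = norm (resolvent A l x - resolvent A m x)" by (simp add: norm_minus_commute)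
  also have "\<dots> \<le> \<bar>m - l\<bar> / m * dd A m x" unfolding dd_def by (rule J_lam[OF mm l0 m0])
  also have "\<dots> \<le> \<bar>m - l\<bar> / a * norm (x - e)"
  proof (rule mult_mono)
    show "\<bar>m - l\<bar> / m \<le> \<bar>m - l\<bar> / a" using a m by (intro divide_left_mono) auto
    show "dd A m x \<le> norm (x - e)" by (rule dd_le_e[OF m0])
  qed (use a in \<open>auto simp: dd_def\<close>)
  finally show ?thesis by (simp add: abs_minus_commute algebra_simps)
qed

lemma phi_cont:
  assumes a: "a > 0"
  shows "continuous_on {a..b} (\<lambda>l. l * dd A l x ^ n)"
proof -
  have "(norm (x - e) / a)-lipschitz_on {a..b} (\<lambda>l. dd A l x)"
  proof (rule lipschitz_onI)
    fix l m assume "l \<in> {a..b}" "m \<in> {a..b}"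
    thus "dist (dd A l x) (dd A m x) \<le> norm (x - e) / a * dist l m"
      using dd_lip_l[OF a, of l m x] by (simp add: dist_real_def)
  next
    show "0 \<le> norm (x - e) / a" using a by simp
  qed
  hence "continuous_on {a..b} (\<lambda>l. dd A l x)" by (rule lipschitz_on_continuous_on)
  thus ?thesis by (intro continuous_intros)
qed

lemma root_exists:
  assumes x: "0 \<notin> A x" "n \<ge> 1"
  shows "\<exists>l>0. l * dd A l x ^ n = \<theta>"
proof -
  define l1 where "l1 = \<theta> / (norm (x - e) ^ n + 1)"
  have l1: "l1 > 0" unfolding l1_def using th by (simp add: add_nonneg_pos)
  have "dd A l1 x ^ n \<le> norm (x - e) ^ n"
    using dd_le_e[OF l1] by (intro power_mono) (auto simp: dd_def)
  hence "l1 * dd A l1 x ^ n \<le> l1 * norm (x - e) ^ n" using l1 by (intro mult_left_mono) auto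
  also have "\<dots> \<le> \<theta>"
  proof -
    have "l1 * norm (x - e) ^ n \<le> l1 * (norm (x - e) ^ n + 1)" using l1 by simp
    also have "\<dots> = \<theta>"
    proof -
      have "norm (x - e) ^ n + 1 > 0" by (intro add_nonneg_pos) auto
      thus ?thesis unfolding l1_def by simp
    qed
    finally show ?thesis .
  qed
  finally have f1: "l1 * dd A l1 x ^ n \<le> \<theta>" .
  have d1: "dd A l1 x > 0" by (rule dd_pos[OF l1 x(1)])
  define l2 where "l2 = l1 + \<theta> / dd A l1 x ^ n"
  have l12: "l1 \<le> l2" unfolding l2_def using th d1 by simp
  have "\<theta> = (\<theta> / dd A l1 x ^ n) * dd A l1 x ^ n" using d1 by simp
  also have "\<dots> \<le> l2 * dd A l1 x ^ n" unfolding l2_def using l1 d1 by (intro mult_right_mono) auto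
  also have "\<dots> \<le> l2 * dd A l2 x ^ n"
    using dd_mono[OF l1 l12, of x] l1 l12 d1 by (intro mult_left_mono power_mono) auto
  finally have f2: "\<theta> \<le> l2 * dd A l2 x ^ n" .
  obtain l where "l1 \<le> l" "l \<le> l2" "l * dd A l x ^ n = \<theta>"
    using IVT'[of "\<lambda>l. l * dd A l x ^ n" l1 \<theta> l2, OF f1 f2 l12 phi_cont[OF l1]] by blast
  thus ?thesis using l1 by (intro exI[of _ l]) auto
qed

lemma root_unique:
  assumes x: "0 \<notin> A x" and l: "l > 0" "l * dd A l x ^ n = \<theta>" and m: "m > 0" "m * dd A m x ^ n = \<theta>"
  shows "l = m"
proof (rule ccontr)
  assume "l \<noteq> m"
  have strict: "a * dd A a x ^ n < b * dd A b x ^ n" if "0 < a" "a < b" for a b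
  proof -
    have "a * dd A a x ^ n < b * dd A a x ^ n" using that dd_pos[OF that(1) x] by simp
    also have "\<dots> \<le> b * dd A b x ^ n" using that dd_mono[of a b x] dd_pos[OF that(1) x]
      by (intro mult_left_mono power_mono) auto
    finally show ?thesis .
  qed
  show False
  proof (cases "l < m")
    case True thus False using strict[OF l(1) True] l(2) m(2) by simp
  next
    case False
    hence "m < l" using \<open>l \<noteq> m\<close> by simp
    thus False using strict[OF m(1) \<open>m < l\<close>] l(2) m(2) by simp
  qed
qed

lemma Lam_root:
  assumes "n = 0 \<or> 0 \<notin> A x"
  shows "LamF A \<theta> n x > 0" "LamF A \<theta> n x * dd A (LamF A \<theta> n x) x ^ n = \<theta>"
    and "\<And>l. l > 0 \<Longrightarrow> l * dd A l x ^ n = \<theta> \<Longrightarrow> l = LamF A \<theta> n x"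
proof -
  have ex1: "\<exists>!l. l > 0 \<and> l * dd A l x ^ n = \<theta>"
  proof (cases "n = 0")
    case True thus ?thesis using th by auto
  next
    case False
    hence x: "0 \<notin> A x" "n \<ge> 1" using assms by auto
    obtain l where "l > 0" "l * dd A l x ^ n = \<theta>" using root_exists[OF x] by blast
    thus ?thesis using root_unique[OF x(1)] by blast
  qed
  have "LamF A \<theta> n x > 0 \<and> LamF A \<theta> n x * dd A (LamF A \<theta> n x) x ^ n = \<theta>"
    unfolding LamF_def by (rule theI'[OF ex1])
  thus "LamF A \<theta> n x > 0" "LamF A \<theta> n x * dd A (LamF A \<theta> n x) x ^ n = \<theta>" by auto
  fix l assume "l > 0" "l * dd A l x ^ n = \<theta>"
  hence "(THE l. l > 0 \<and> l * dd A l x ^ n = \<theta>) = l" by (intro the1_equality[OF ex1]) auto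
  thus "l = LamF A \<theta> n x" unfolding LamF_def by simp
qed

lemma root_in_Omega:
  assumes "n \<ge> 1" "l > 0" "l * dd A l x ^ n = \<theta>"
  shows "0 \<notin> A x"
proof
  assume "0 \<in> A x"
  hence d0: "dd A l x = 0" by (rule dd_zero[OF assms(2)])
  have "\<theta> = l * dd A l x ^ n" using assms(3) by simp
  also have "\<dots> = 0" unfolding d0 using assms(1) by (simp add: power_0_left)
  finally show False using th by simp
qed

end

lemma tri_via:
  fixes a b c :: "'a::real_normed_vector"
  shows "norm (a - b) \<le> norm (a - c) + norm (c - b)"
proof -
  have "norm (a - b) = norm ((a - c) + (c - b))" by simp
  also have "\<dots> \<le> norm (a - c) + norm (c - b)" by (rule norm_triangle_ineq)
  finally show ?thesis .
qed

lemma tri3: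
  fixes P Q S :: "'a::real_normed_vector"
  shows "norm (P + Q - S) \<le> norm P + norm Q + norm S"
proof -
  have "norm (P + Q - S) \<le> norm (P + Q) + norm S" by (rule norm_triangle_ineq4)
  also have "\<dots> \<le> norm P + norm Q + norm S" using norm_triangle_ineq[of P Q] by simp
  finally show ?thesis .
qed

context
  fixes A :: "'a::{real_inner,complete_space} \<Rightarrow> 'a set" and \<theta> :: real and n :: nat and e :: 'a
  assumes mm: "maximal_monotone A" and th: "\<theta> > 0" and e: "0 \<in> A e"
begin

abbreviation "Lm \<equiv> LamF A \<theta> n"

lemma Lam_step:
  assumes n: "n \<ge> 1" and x: "0 \<notin> A x" and x': "0 \<notin> A x'"
    and dl: "norm (x - x') \<le> dd A (Lm x) x" and le: "Lm x \<le> Lm x'"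
  shows "Lm x' * (1 - n * norm (x - x') / dd A (Lm x) x) \<le> Lm x"
proof -
  define L where "L = Lm x"
  define L' where "L' = Lm x'"
  define D where "D = dd A L x"
  define \<delta> where "\<delta> = norm (x - x')"
  have L: "L > 0" "L * D ^ n = \<theta>" unfolding L_def D_def using Lam_root(1,2)[OF mm th e, of n x] x by blast+
  have L': "L' > 0" "L' * dd A L' x' ^ n = \<theta>" unfolding L'_def using Lam_root(1,2)[OF mm th e, of n x'] x' by blast+
  have D: "D > 0" unfolding D_def by (rule dd_pos[OF mm th e L(1) x])
  have dlD: "\<delta> \<le> D" using dl unfolding \<delta>_def D_def L_def .
  have "dd A L' x' \<ge> dd A L' x - \<delta>" using dd_lip_x[OF mm th e L'(1), of x x'] unfolding \<delta>_def by simp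
  moreover have "dd A L' x \<ge> D" unfolding D_def using dd_mono[OF mm th e L(1), of L' x] le
    unfolding L_def L'_def by simp
  ultimately have d': "dd A L' x' \<ge> D - \<delta>" by simp
  define s where "s = \<delta> / D"
  have s: "0 \<le> s" "s \<le> 1" unfolding s_def \<delta>_def using D dlD by (auto simp: \<delta>_def)
  have Ds: "D - \<delta> = D * (1 - s)" unfolding s_def using D by (simp add: field_simps)
  have bern: "1 + real n * (- s) \<le> (1 + - s) ^ n" by (rule Bernoulli_inequality) (use s in simp)
  have "L' * (D ^ n * (1 - n * s)) \<le> L' * (D ^ n * (1 - s) ^ n)"
    using bern L'(1) D by (intro mult_left_mono) auto
  also have "\<dots> = L' * (D - \<delta>) ^ n" unfolding Ds by (simp add: power_mult_distrib)
  also have "\<dots> \<le> L' * dd A L' x' ^ n"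
    using d' dlD L'(1) by (intro mult_left_mono power_mono) auto
  also have "\<dots> = L * D ^ n" using L(2) L'(2) by simp
  finally have "(L' * (1 - n * s)) * D ^ n \<le> L * D ^ n" by (simp add: algebra_simps)
  hence "L' * (1 - n * s) \<le> L" using D by (simp add: mult_le_cancel_right)
  thus ?thesis unfolding L'_def L_def s_def \<delta>_def D_def by (simp add: mult.assoc)
qed

lemma local_lip:
  assumes z: "n = 0 \<or> 0 \<notin> A z"
  shows "\<exists>r>0. \<exists>L M. (\<forall>x\<in>cball z r. (n = 0 \<or> 0 \<notin> A x) \<and> norm (resolvent A (Lm x) x - x) \<le> M) \<and>
           (\<forall>x\<in>cball z r. \<forall>y\<in>cball z r.
              norm ((resolvent A (Lm x) x - x) - (resolvent A (Lm y) y - y)) \<le> L * norm (x - y) \<and>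
              \<bar>Lm x - Lm y\<bar> \<le> L * norm (x - y))"
proof (cases "n = 0")
  case True
  have Lt: "Lm x = \<theta>" for x
  proof -
    have "n = 0 \<or> 0 \<notin> A x" using True by simp
    from Lam_root(3)[OF mm th e this, of \<theta>] show ?thesis using True th by simp
  qed
  have P1: "(n = 0 \<or> 0 \<notin> A x) \<and> norm (resolvent A (Lm x) x - x) \<le> norm (z - e) + 1"
    if x: "x \<in> cball z 1" for x
  proof
    show "n = 0 \<or> 0 \<notin> A x" using True by simp
    have "norm (resolvent A (Lm x) x - x) = dd A \<theta> x" unfolding Lt dd_def by (simp add: norm_minus_commute)
    also have "\<dots> \<le> norm (x - e)" by (rule dd_le_e[OF mm th e th])
    also have "\<dots> \<le> norm (x - z) + norm (z - e)" by (rule tri_via)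
    also have "\<dots> \<le> norm (z - e) + 1" using x by (simp add: dist_norm norm_minus_commute)
    finally show "norm (resolvent A (Lm x) x - x) \<le> norm (z - e) + 1" .
  qed
  have P2: "norm ((resolvent A (Lm x) x - x) - (resolvent A (Lm y) y - y)) \<le> 2 * norm (x - y) \<and>
              \<bar>Lm x - Lm y\<bar> \<le> 2 * norm (x - y)" for x y
  proof
    have eq: "(resolvent A \<theta> x - x) - (resolvent A \<theta> y - y) = (resolvent A \<theta> x - resolvent A \<theta> y) - (x - y)"
      by simp
    have "norm ((resolvent A \<theta> x - x) - (resolvent A \<theta> y - y))
        \<le> norm (resolvent A \<theta> x - resolvent A \<theta> y) + norm (x - y)"
      unfolding eq by (rule norm_triangle_ineq4)
    also have "\<dots> \<le> 2 * norm (x - y)" using J_nonexp[OF mm th, of x y] by simp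
    finally show "norm ((resolvent A (Lm x) x - x) - (resolvent A (Lm y) y - y)) \<le> 2 * norm (x - y)"
      unfolding Lt .
    show "\<bar>Lm x - Lm y\<bar> \<le> 2 * norm (x - y)" unfolding Lt by simp
  qed
  have "(1::real) > 0" by simp
  thus ?thesis using P1 P2 by blast
next
  case False
  hence n: "n \<ge> 1" by simp
  have zO: "0 \<notin> A z" using z False by simp
  define L0 where "L0 = Lm z"
  define D0 where "D0 = dd A L0 z"
  have L0: "L0 > 0" "L0 * D0 ^ n = \<theta>" unfolding L0_def D0_def using Lam_root(1,2)[OF mm th e, of n z] zO by blast+
  have D0: "D0 > 0" unfolding D0_def by (rule dd_pos[OF mm th e L0(1) zO])
  define r where "r = D0 / (4 * n)"
  have r: "r > 0" unfolding r_def using D0 n by simp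
  have nr: "n * r = D0 / 4" unfolding r_def using n by simp
  define R where "R = norm (z - e) + r"
  have D0e: "D0 \<le> norm (z - e)" unfolding D0_def by (rule dd_le_e[OF mm th e L0(1)])
  have Rpos: "R > 0" unfolding R_def using D0 D0e r by simp
  have inO: "0 \<notin> A x" if x: "x \<in> cball z r" for x
  proof -
    have dx: "norm (z - x) \<le> r" using x by (simp add: dist_norm)
    have "r < D0" unfolding r_def using D0 n by (simp add: field_simps)
    have "dd A L0 x \<ge> D0 - norm (z - x)"
      using dd_lip_x[OF mm th e L0(1), of z x] unfolding D0_def by simp
    hence "dd A L0 x > 0" using dx \<open>r < D0\<close> by simp
    thus ?thesis using dd_zero[OF mm th e L0(1), of x] by auto
  qed
  have root: "Lm x > 0" "Lm x * dd A (Lm x) x ^ n = \<theta>" if "x \<in> cball z r" for x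
    using Lam_root(1,2)[OF mm th e, of n x] inO[OF that] by blast+
  have Lup: "Lm x \<le> 2 * L0" if x: "x \<in> cball z r" for x
  proof (cases "Lm x \<le> L0")
    case True thus ?thesis using L0 by simp
  next
    case False
    have dx: "norm (z - x) \<le> r" using x by (simp add: dist_norm)
    have "r < D0" unfolding r_def using D0 n by (simp add: field_simps)
    hence "norm (z - x) \<le> dd A (Lm z) z" using dx unfolding D0_def L0_def by simp
    from Lam_step[OF n zO inO[OF x] this] False
    have st: "Lm x * (1 - n * norm (z - x) / D0) \<le> L0" unfolding L0_def D0_def by simp
    have "n * norm (z - x) \<le> n * r" using dx by (intro mult_left_mono) auto
    hence "n * norm (z - x) / D0 \<le> 1/4" using nr D0 by (simp add: divide_le_eq)
    hence "Lm x * (3/4) \<le> Lm x * (1 - n * norm (z - x) / D0)" using root(1)[OF x]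
      by (intro mult_left_mono) auto
    hence "Lm x * (3/4) \<le> L0" using st by (rule order_trans)
    thus ?thesis using L0 by simp
  qed
  have Dlow: "dd A (Lm x) x \<ge> D0 / 2" if x: "x \<in> cball z r" for x
  proof (rule ccontr)
    assume "\<not> dd A (Lm x) x \<ge> D0 / 2"
    hence lt: "dd A (Lm x) x < D0 / 2" by simp
    have "dd A (Lm x) x ^ n < (D0 / 2) ^ n"
      using lt n by (intro power_strict_mono) (auto simp: dd_def)
    also have "(D0 / 2) ^ n = D0 ^ n / 2 ^ n" by (simp add: power_divide)
    also have "\<dots> \<le> D0 ^ n / 2"
    proof -
      have "(2::real) \<le> 2 ^ n" using n by (metis power_one_right power_increasing one_le_numeral)
      thus ?thesis using D0 by (intro divide_left_mono) auto
    qed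
    finally have "dd A (Lm x) x ^ n < D0 ^ n / 2" .
    hence "Lm x * dd A (Lm x) x ^ n < Lm x * (D0 ^ n / 2)" using root(1)[OF x] by simp
    also have "\<dots> \<le> 2 * L0 * (D0 ^ n / 2)" using Lup[OF x] D0 by (intro mult_right_mono) auto
    also have "\<dots> = \<theta>" using L0(2) by simp
    finally show False using root(2)[OF x] by simp
  qed
  have Dup: "dd A (Lm x) x \<le> R" if x: "x \<in> cball z r" for x
  proof -
    have "dd A (Lm x) x \<le> norm (x - e)" by (rule dd_le_e[OF mm th e root(1)[OF x]])
    also have "\<dots> \<le> norm (x - z) + norm (z - e)" by (rule tri_via)
    also have "\<dots> \<le> R" unfolding R_def using x by (simp add: dist_norm norm_minus_commute)
    finally show ?thesis .
  qed
  define Lmin where "Lmin = \<theta> / R ^ n"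
  have Lmin: "Lmin > 0" unfolding Lmin_def using th Rpos by simp
  have Llow: "Lm x \<ge> Lmin" if x: "x \<in> cball z r" for x
  proof -
    have "\<theta> = Lm x * dd A (Lm x) x ^ n" using root(2)[OF x] by simp
    also have "\<dots> \<le> Lm x * R ^ n" using Dup[OF x] root(1)[OF x]
      by (intro mult_left_mono power_mono) (auto simp: dd_def)
    finally show ?thesis unfolding Lmin_def using Rpos by (simp add: divide_le_eq)
  qed
  define KL where "KL = 4 * n * L0 / D0"
  have KL: "KL \<ge> 0" unfolding KL_def using L0 D0 by simp
  have Lam_lip_half: "Lm y - Lm x \<le> KL * norm (x - y)" if x: "x \<in> cball z r" and y: "y \<in> cball z r"
    and le: "Lm x \<le> Lm y" for x y
  proof -
    have dxy: "norm (x - y) \<le> 2 * r"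
    proof -
      have "norm (x - y) \<le> norm (x - z) + norm (z - y)" by (rule tri_via)
      thus ?thesis using x y by (simp add: dist_norm norm_minus_commute)
    qed
    have "2 * r \<le> D0 / 2" unfolding r_def using D0 n by (simp add: field_simps)
    hence dD: "norm (x - y) \<le> dd A (Lm x) x" using dxy Dlow[OF x] by simp
    have st: "Lm y * (1 - n * norm (x - y) / dd A (Lm x) x) \<le> Lm x"
      by (rule Lam_step[OF n inO[OF x] inO[OF y] dD le])
    have Dx: "dd A (Lm x) x > 0" using Dlow[OF x] D0 by simp
    have "Lm y - Lm x \<le> Lm y * (n * norm (x - y) / dd A (Lm x) x)" using st by (simp add: algebra_simps)
    also have "\<dots> \<le> (2 * L0) * (n * norm (x - y) / (D0 / 2))"
    proof (rule mult_mono)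
      show "Lm y \<le> 2 * L0" by (rule Lup[OF y])
      show "n * norm (x - y) / dd A (Lm x) x \<le> n * norm (x - y) / (D0 / 2)"
        using Dlow[OF x] D0 by (intro divide_left_mono) auto
    qed (use L0 Dx in auto)
    also have "\<dots> = KL * norm (x - y)" unfolding KL_def using D0 by (simp add: field_simps)
    finally show ?thesis .
  qed
  have Lam_lip: "\<bar>Lm x - Lm y\<bar> \<le> KL * norm (x - y)" if x: "x \<in> cball z r" and y: "y \<in> cball z r" for x y
  proof (cases "Lm x \<le> Lm y")
    case True thus ?thesis using Lam_lip_half[OF x y True] by simp
  next
    case False
    hence "Lm y \<le> Lm x" by simp
    thus ?thesis using Lam_lip_half[OF y x] by (simp add: norm_minus_commute)
  qed
  define KF where "KF = 2 + KL * R / Lmin"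
  have F_lip: "norm ((resolvent A (Lm x) x - x) - (resolvent A (Lm y) y - y)) \<le> KF * norm (x - y)"
    if x: "x \<in> cball z r" and y: "y \<in> cball z r" for x y
  proof -
    have lx: "Lm x > 0" and ly: "Lm y > 0" using root(1) x y by auto
    have "norm ((resolvent A (Lm x) x - x) - (resolvent A (Lm y) y - y))
        \<le> norm (resolvent A (Lm x) x - resolvent A (Lm x) y) + norm (resolvent A (Lm x) y - resolvent A (Lm y) y) + norm (x - y)"
    proof -
      have "(resolvent A (Lm x) x - x) - (resolvent A (Lm y) y - y)
          = (resolvent A (Lm x) x - resolvent A (Lm x) y) + (resolvent A (Lm x) y - resolvent A (Lm y) y) - (x - y)"
        by (simp add: algebra_simps)
      thus ?thesis using tri3 by metis
    qed
    also have "\<dots> \<le> norm (x - y) + (\<bar>Lm y - Lm x\<bar> / Lm y * dd A (Lm y) y) + norm (x - y)"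
    proof -
      have "norm (resolvent A (Lm x) x - resolvent A (Lm x) y) \<le> norm (x - y)" by (rule J_nonexp[OF mm lx])
      moreover have "norm (resolvent A (Lm x) y - resolvent A (Lm y) y) \<le> \<bar>Lm y - Lm x\<bar> / Lm y * dd A (Lm y) y"
        unfolding dd_def by (rule J_lam[OF mm lx ly])
      ultimately show ?thesis by simp
    qed
    also have "\<bar>Lm y - Lm x\<bar> / Lm y * dd A (Lm y) y \<le> (KL * norm (x - y)) / Lmin * R"
    proof (rule mult_mono)
      show "\<bar>Lm y - Lm x\<bar> / Lm y \<le> KL * norm (x - y) / Lmin"
      proof (rule frac_le)
        show "\<bar>Lm y - Lm x\<bar> \<le> KL * norm (x - y)" using Lam_lip[OF x y] by (simp add: abs_minus_commute)
      qed (use KL Lmin Llow[OF y] in auto)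
      show "dd A (Lm y) y \<le> R" by (rule Dup[OF y])
    qed (use KL Lmin in \<open>auto simp: dd_def\<close>)
    also have "norm (x - y) + (KL * norm (x - y)) / Lmin * R + norm (x - y) = KF * norm (x - y)"
      unfolding KF_def using Lmin by (simp add: field_simps)
    finally show ?thesis by simp
  qed
  have P1: "(n = 0 \<or> 0 \<notin> A x) \<and> norm (resolvent A (Lm x) x - x) \<le> R" if x: "x \<in> cball z r" for x
    using inO[OF x] Dup[OF x] unfolding dd_def by (simp add: norm_minus_commute)
  have P2: "norm ((resolvent A (Lm x) x - x) - (resolvent A (Lm y) y - y)) \<le> max KL KF * norm (x - y) \<and>
              \<bar>Lm x - Lm y\<bar> \<le> max KL KF * norm (x - y)"
    if x: "x \<in> cball z r" and y: "y \<in> cball z r" for x y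
  proof
    have "KF * norm (x - y) \<le> max KL KF * norm (x - y)" by (intro mult_right_mono) auto
    thus "norm ((resolvent A (Lm x) x - x) - (resolvent A (Lm y) y - y)) \<le> max KL KF * norm (x - y)"
      using F_lip[OF x y] by simp
    have "KL * norm (x - y) \<le> max KL KF * norm (x - y)" by (intro mult_right_mono) auto
    thus "\<bar>Lm x - Lm y\<bar> \<le> max KL KF * norm (x - y)" using Lam_lip[OF x y] by simp
  qed
  show ?thesis using r P1 P2 by blast
qed

end

lemma mvt_vec:
  fixes g :: "real \<Rightarrow> 'a::real_normed_vector"
  assumes "a \<le> b" and der: "\<And>s. s \<in> {a..b} \<Longrightarrow> (g has_vector_derivative g' s) (at s within {a..b})"
    and bnd: "\<And>s. s \<in> {a..b} \<Longrightarrow> norm (g' s) \<le> B" and s: "s \<in> {a..b}"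
  shows "norm (g s - g a) \<le> B * (s - a)"
proof -
  have "norm (g s - g a) \<le> B * norm (s - a)"
  proof (rule differentiable_bound[where f' = "\<lambda>s h. h *\<^sub>R g' s"])
    show "convex {a..b}" by simp
    show "\<And>x. x \<in> {a..b} \<Longrightarrow> (g has_derivative (\<lambda>h. h *\<^sub>R g' x)) (at x within {a..b})"
      using der unfolding has_vector_derivative_def by blast
    show "onorm (\<lambda>h. h *\<^sub>R g' x) \<le> B" if "x \<in> {a..b}" for x
    proof (rule onorm_le)
      fix h :: real
      have "\<bar>h\<bar> * norm (g' x) \<le> \<bar>h\<bar> * B" using bnd[OF that] by (intro mult_left_mono) auto
      thus "norm (h *\<^sub>R g' x) \<le> B * norm h" by (simp add: mult.commute)
    qed
    show "s \<in> {a..b}" by (rule s)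
    show "a \<in> {a..b}" using assms(1) by simp
  qed
  thus ?thesis using s by simp
qed

primrec pic :: "('a::real_normed_vector \<Rightarrow> 'a) \<Rightarrow> 'a \<Rightarrow> nat \<Rightarrow> real \<Rightarrow> 'a" where
  "pic F x0 0 = (\<lambda>t. x0)"
| "pic F x0 (Suc k) = (\<lambda>t. x0 + integral {0..t} (\<lambda>s. F (pic F x0 k s)))"

lemma geom_tele:
  fixes f :: "nat \<Rightarrow> 'a::real_normed_vector"
  assumes "\<And>k. norm (f (Suc k) - f k) \<le> C * (1/2)^k"
  shows "norm (f (n + j) - f n) \<le> 2 * C * ((1/2)^n - (1/2)^(n+j))"
proof (induction j)
  case 0 thus ?case by simp
next
  case (Suc j)
  have "norm (f (n + Suc j) - f n) \<le> norm (f (Suc (n + j)) - f (n + j)) + norm (f (n + j) - f n)"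
    using tri_via[of "f (Suc (n + j))" "f n" "f (n + j)"] by simp
  also have "\<dots> \<le> C * (1/2)^(n+j) + 2 * C * ((1/2)^n - (1/2)^(n+j))"
    using assms[of "n + j"] Suc by simp
  also have "\<dots> = 2 * C * ((1/2)^n - (1/2)^(n + Suc j))"
    by (simp add: algebra_simps)
  finally show ?case .
qed

lemma ode_exist_b:
  fixes F :: "'a::banach \<Rightarrow> 'a"
  assumes r: "r > 0"
    and lip: "\<And>x y. x \<in> cball x0 r \<Longrightarrow> y \<in> cball x0 r \<Longrightarrow> norm (F x - F y) \<le> L * norm (x - y)"
    and bnd: "\<And>x. x \<in> cball x0 r \<Longrightarrow> norm (F x) \<le> M"
  shows "\<exists>T>0. \<exists>x. x 0 = x0 \<and> (\<forall>t\<in>{0..T}. x t \<in> cball x0 r \<and>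
            (x has_vector_derivative F (x t)) (at t within {0..T}))"
proof -
  define L' where "L' = max L 1"
  define M' where "M' = max M 1"
  have L': "L' > 0" "L \<le> L'" unfolding L'_def by auto
  have M': "M' > 0" "M \<le> M'" unfolding M'_def by auto
  define T where "T = min (r / M') (1 / (2 * L'))"
  have T: "T > 0" "T * M' \<le> r" "T * L' \<le> 1/2" unfolding T_def using r L' M'
    by (auto simp: min_def field_simps)
  have lip': "norm (F x - F y) \<le> L' * norm (x - y)" if "x \<in> cball x0 r" "y \<in> cball x0 r" for x y
    using lip[OF that] L'(2) by (meson mult_right_mono norm_ge_zero order_trans)
  have bnd': "norm (F x) \<le> M'" if "x \<in> cball x0 r" for x using bnd[OF that] M'(2) by simp
  have Fc: "continuous_on (cball x0 r) F"
  proof (rule lipschitz_on_continuous_on)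
    show "L'-lipschitz_on (cball x0 r) F"
      by (rule lipschitz_onI) (use lip' L' in \<open>auto simp: dist_norm\<close>)
  qed
  define P where "P = pic F x0"
  define I where "I = {0..T}"
  have I0: "0 \<in> I" unfolding I_def using T by simp
  have inv: "continuous_on I (P k) \<and> (\<forall>t\<in>I. P k t \<in> cball x0 r)" for k
  proof (induction k)
    case 0 thus ?case using r unfolding P_def by (auto intro: continuous_intros less_imp_le)
  next
    case (Suc k)
    define g where "g s = F (P k s)" for s
    have sub: "P k ` I \<subseteq> cball x0 r" using Suc by blast
    have gc: "continuous_on I g" unfolding g_def
      using continuous_on_compose2[OF Fc _ sub] Suc by blast
    have gb: "norm (g s) \<le> M'" if "s \<in> I" for s unfolding g_def using bnd' Suc that by auto
    have PS: "P (Suc k) t = x0 + integral {0..t} g" for t unfolding P_def g_def by simp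
    have der: "((\<lambda>u. x0 + integral {0..u} g) has_vector_derivative g t) (at t within I)" if "t \<in> I" for t
      using integral_has_vector_derivative[OF gc[unfolded I_def] that[unfolded I_def]] unfolding I_def
      by (auto intro!: derivative_eq_intros)
    have "continuous_on I (\<lambda>u. x0 + integral {0..u} g)"
      using der by (auto simp: continuous_on_eq_continuous_within intro: has_vector_derivative_continuous)
    moreover have "x0 + integral {0..t} g \<in> cball x0 r" if t: "t \<in> I" for t
    proof -
      have "norm (integral {0..t} g) \<le> M' * (t - 0)"
        by (rule integral_bound) (use t gb gc in \<open>auto simp: I_def intro: continuous_on_subset\<close>)
      also have "\<dots> \<le> M' * T" using t M' unfolding I_def by (intro mult_left_mono) auto
      also have "\<dots> \<le> r" using T by (simp add: mult.commute)
      finally show ?thesis by (simp add: dist_norm)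
    qed
    ultimately show ?case unfolding PS[abs_def] by auto
  qed
  have Pc: "continuous_on I (P k)" and Pb: "t \<in> I \<Longrightarrow> P k t \<in> cball x0 r" for k t using inv by auto
  have gc: "continuous_on I (\<lambda>s. F (P k s))" for k
  proof -
    have "P k ` I \<subseteq> cball x0 r" using Pb by blast
    thus ?thesis using continuous_on_compose2[OF Fc Pc[of k]] by blast
  qed
  have diff: "\<forall>t\<in>I. norm (P (Suc k) t - P k t) \<le> r * (1/2)^k" for k
  proof (induction k)
    case 0
    show ?case
    proof
      fix t assume "t \<in> I"
      thus "norm (P (Suc 0) t - P 0 t) \<le> r * (1/2)^0"
        using Pb[of t "Suc 0"] unfolding P_def by (simp add: dist_norm norm_minus_commute)
    qed
  next
    case (Suc k)
    show ?case
    proof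
      fix t assume t: "t \<in> I"
      have sub: "{0..t} \<subseteq> I" using t unfolding I_def by auto
      have int: "(\<lambda>s. F (P j s)) integrable_on {0..t}" for j
        using gc[of j] sub by (auto intro: integrable_continuous_real continuous_on_subset)
      have "P (Suc (Suc k)) t - P (Suc k) t = integral {0..t} (\<lambda>s. F (P (Suc k) s)) - integral {0..t} (\<lambda>s. F (P k s))"
        unfolding P_def by simp
      also have "\<dots> = integral {0..t} (\<lambda>s. F (P (Suc k) s) - F (P k s))"
        by (rule integral_diff[symmetric]) (use int in auto)
      finally have eq: "P (Suc (Suc k)) t - P (Suc k) t = integral {0..t} (\<lambda>s. F (P (Suc k) s) - F (P k s))" .
      have "norm (integral {0..t} (\<lambda>s. F (P (Suc k) s) - F (P k s))) \<le> (L' * (r * (1/2)^k)) * (t - 0)"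
      proof (rule integral_bound)
        show "0 \<le> t" using t unfolding I_def by simp
        show "continuous_on {0..t} (\<lambda>s. F (P (Suc k) s) - F (P k s))"
          using gc[of "Suc k"] gc[of k] sub by (auto intro: continuous_intros continuous_on_subset)
        fix s assume s: "s \<in> {0..t}"
        hence sI: "s \<in> I" using sub by auto
        have "norm (F (P (Suc k) s) - F (P k s)) \<le> L' * norm (P (Suc k) s - P k s)"
          using lip' Pb[OF sI] by blast
        also have "\<dots> \<le> L' * (r * (1/2)^k)" using Suc sI L' by (intro mult_left_mono) auto
        finally show "norm (F (P (Suc k) s) - F (P k s)) \<le> L' * (r * (1/2)^k)" .
      qed
      also have "\<dots> \<le> (L' * (r * (1/2)^k)) * T" using t L' r unfolding I_def
        by (intro mult_left_mono) auto
      also have "\<dots> = (T * L') * (r * (1/2)^k)" by (simp add: algebra_simps)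
      also have "\<dots> \<le> (1/2) * (r * (1/2)^k)" using T r by (intro mult_right_mono) auto
      also have "\<dots> = r * (1/2)^Suc k" by simp
      finally show "norm (P (Suc (Suc k)) t - P (Suc k) t) \<le> r * (1/2)^Suc k" unfolding eq .
    qed
  qed
  have cau: "norm (P m t - P n t) \<le> 2 * r * (1/2)^n" if tI: "t \<in> I" and nm: "n \<le> m" for m n t
  proof -
    obtain j where m: "m = n + j" using nm le_Suc_ex by blast
    have "norm (P (n + j) t - P n t) \<le> 2 * r * ((1/2)^n - (1/2)^(n+j))"
      by (rule geom_tele) (use diff tI in auto)
    also have "\<dots> \<le> 2 * r * (1/2)^n" using r by simp
    finally show ?thesis unfolding m .
  qed
  have ec: "(\<lambda>n. 2 * r * (1/2::real)^n) \<longlonglongrightarrow> 0"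
    using tendsto_mult[OF tendsto_const[of "2 * r"] LIMSEQ_power_zero[of "1/2::real"]] by simp
  have conv: "convergent (\<lambda>k. P k t)" if t: "t \<in> I" for t
  proof -
    have "Cauchy (\<lambda>k. P k t)"
    proof (rule CauchyI)
      fix \<epsilon> :: real assume "\<epsilon> > 0"
      then obtain N where N: "2 * r * (1/2)^N < \<epsilon>"
        using order_tendstoD(2)[OF ec] by (auto simp: eventually_sequentially)
      show "\<exists>N. \<forall>m\<ge>N. \<forall>n\<ge>N. norm (P m t - P n t) < \<epsilon>"
      proof (intro exI allI impI)
        fix m n assume mn: "N \<le> m" "N \<le> n"
        have mono: "2 * r * (1/2::real)^k \<le> 2 * r * (1/2)^N" if "N \<le> k" for k
          using r that by (intro mult_left_mono power_decreasing) auto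
        show "norm (P m t - P n t) < \<epsilon>"
        proof (cases "n \<le> m")
          case True thus ?thesis using cau[OF t True] mono[OF mn(2)] N by linarith
        next
          case False
          hence mn': "m \<le> n" by simp
          have "norm (P n t - P m t) < \<epsilon>" using cau[OF t mn'] mono[OF mn(1)] N by linarith
          thus ?thesis by (simp add: norm_minus_commute)
        qed
      qed
    qed
    thus ?thesis by (simp add: Cauchy_convergent_iff)
  qed
  define \<phi> where "\<phi> t = lim (\<lambda>k. P k t)" for t
  have \<phi>lim: "(\<lambda>k. P k t) \<longlonglongrightarrow> \<phi> t" if "t \<in> I" for t
    unfolding \<phi>_def using conv[OF that] by (simp add: convergent_LIMSEQ_iff)
  have \<phi>near: "norm (\<phi> t - P n t) \<le> 2 * r * (1/2)^n" if t: "t \<in> I" for t n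
  proof (rule LIMSEQ_le_const2)
    show "(\<lambda>m. norm (P m t - P n t)) \<longlonglongrightarrow> norm (\<phi> t - P n t)"
      by (intro tendsto_intros \<phi>lim[OF t])
    show "\<exists>N. \<forall>m\<ge>N. norm (P m t - P n t) \<le> 2 * r * (1/2)^n"
      using cau[OF t] by blast
  qed
  have \<phi>b: "\<phi> t \<in> cball x0 r" if t: "t \<in> I" for t
    using closed_sequentially[OF closed_cball _ \<phi>lim[OF t]] Pb[OF t] by blast
  have ul: "uniform_limit I P \<phi> sequentially"
    unfolding uniform_limit_iff
  proof (intro allI impI)
    fix \<epsilon> :: real assume "\<epsilon> > 0"
    hence "\<forall>\<^sub>F n in sequentially. 2 * r * (1/2)^n < \<epsilon>" using order_tendstoD(2)[OF ec] by blast
    thus "\<forall>\<^sub>F n in sequentially. \<forall>t\<in>I. dist (P n t) (\<phi> t) < \<epsilon>"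
    proof (rule eventually_mono)
      fix n assume n: "2 * r * (1/2)^n < \<epsilon>"
      show "\<forall>t\<in>I. dist (P n t) (\<phi> t) < \<epsilon>"
        using \<phi>near n by (auto simp: dist_norm norm_minus_commute intro: le_less_trans)
    qed
  qed
  have \<phi>c: "continuous_on I \<phi>"
    by (rule uniform_limit_theorem[OF _ ul]) (use Pc in auto)
  have g\<phi>c: "continuous_on I (\<lambda>s. F (\<phi> s))"
  proof -
    have "\<phi> ` I \<subseteq> cball x0 r" using \<phi>b by blast
    thus ?thesis using continuous_on_compose2[OF Fc \<phi>c] by blast
  qed
  have inteq: "\<phi> t = x0 + integral {0..t} (\<lambda>s. F (\<phi> s))" if t: "t \<in> I" for t
  proof -
    have sub: "{0..t} \<subseteq> I" using t unfolding I_def by auto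
    have t0: "0 \<le> t" using t unfolding I_def by simp
    have "(\<lambda>k. P (Suc k) t) \<longlonglongrightarrow> x0 + integral {0..t} (\<lambda>s. F (\<phi> s))"
    proof -
      have "(\<lambda>k. (P (Suc k) t - (x0 + integral {0..t} (\<lambda>s. F (\<phi> s))))) \<longlonglongrightarrow> 0"
      proof (rule Lim_null_comparison)
        show "\<forall>\<^sub>F k in sequentially. norm (P (Suc k) t - (x0 + integral {0..t} (\<lambda>s. F (\<phi> s)))) \<le> L' * (2 * r * (1/2)^k) * t"
        proof (intro always_eventually allI)
          fix k
          have int1: "(\<lambda>s. F (P k s)) integrable_on {0..t}"
            using gc[of k] sub by (auto intro: integrable_continuous_real continuous_on_subset)
          have int2: "(\<lambda>s. F (\<phi> s)) integrable_on {0..t}"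
            using g\<phi>c sub by (auto intro: integrable_continuous_real continuous_on_subset)
          have "P (Suc k) t - (x0 + integral {0..t} (\<lambda>s. F (\<phi> s)))
              = integral {0..t} (\<lambda>s. F (P k s) - F (\<phi> s))"
          proof -
            have "P (Suc k) t = x0 + integral {0..t} (\<lambda>s. F (P k s))" unfolding P_def by simp
            thus ?thesis using integral_diff[OF int1 int2] by simp
          qed
          also have "norm \<dots> \<le> L' * (2 * r * (1/2)^k) * (t - 0)"
          proof (rule integral_bound)
            show "0 \<le> t" by (rule t0)
            show "continuous_on {0..t} (\<lambda>s. F (P k s) - F (\<phi> s))"
              using gc[of k] g\<phi>c sub by (auto intro: continuous_intros continuous_on_subset)
            fix s assume "s \<in> {0..t}"
            hence sI: "s \<in> I" using sub by auto
            have "norm (F (P k s) - F (\<phi> s)) \<le> L' * norm (P k s - \<phi> s)"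
              using lip' Pb[OF sI] \<phi>b[OF sI] by blast
            also have "\<dots> \<le> L' * (2 * r * (1/2)^k)"
              using \<phi>near[OF sI, of k] L' by (intro mult_left_mono) (auto simp: norm_minus_commute)
            finally show "norm (F (P k s) - F (\<phi> s)) \<le> L' * (2 * r * (1/2)^k)" .
          qed
          finally show "norm (P (Suc k) t - (x0 + integral {0..t} (\<lambda>s. F (\<phi> s)))) \<le> L' * (2 * r * (1/2)^k) * t"
            by simp
        qed
        have "(\<lambda>k. L' * (2 * r * (1/2::real)^k) * t) \<longlonglongrightarrow> L' * 0 * t"
          by (intro tendsto_intros ec)
        thus "(\<lambda>k. L' * (2 * r * (1/2::real)^k) * t) \<longlonglongrightarrow> 0" by simp
      qed
      hence "(\<lambda>k. (P (Suc k) t - (x0 + integral {0..t} (\<lambda>s. F (\<phi> s)))) + (x0 + integral {0..t} (\<lambda>s. F (\<phi> s))))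
          \<longlonglongrightarrow> 0 + (x0 + integral {0..t} (\<lambda>s. F (\<phi> s)))"
        by (intro tendsto_add tendsto_const)
      thus ?thesis by simp
    qed
    moreover have "(\<lambda>k. P (Suc k) t) \<longlonglongrightarrow> \<phi> t"
      using \<phi>lim[OF t] by (rule LIMSEQ_Suc)
    ultimately show ?thesis using LIMSEQ_unique by blast
  qed
  have der: "(\<phi> has_vector_derivative F (\<phi> t)) (at t within I)" if t: "t \<in> I" for t
  proof (rule has_vector_derivative_transform[OF t])
    show "\<And>x. x \<in> I \<Longrightarrow> \<phi> x = x0 + integral {0..x} (\<lambda>s. F (\<phi> s))" by (rule inteq)
    show "((\<lambda>u. x0 + integral {0..u} (\<lambda>s. F (\<phi> s))) has_vector_derivative F (\<phi> t)) (at t within I)"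
      using integral_has_vector_derivative[OF g\<phi>c[unfolded I_def] t[unfolded I_def]] unfolding I_def
      by (auto intro!: derivative_eq_intros)
  qed
  have \<phi>0: "\<phi> 0 = x0" using inteq[OF I0] by simp
  show ?thesis
    using T(1) \<phi>0 \<phi>b der unfolding I_def by blast
qed

lemma nfst: "norm (fst (q::'a::real_normed_vector \<times> 'b::real_normed_vector)) \<le> norm q"
  using norm_fst_le[of "fst q" "snd q"] by simp

instance prod :: ("{real_normed_vector,complete_space}", "{real_normed_vector,complete_space}") banach
  by intro_classes

lemma ode_exist:
  fixes F :: "'a::{real_inner,complete_space} \<Rightarrow> 'a"
  assumes r: "r > 0"
    and lip: "\<And>x y. x \<in> cball x0 r \<Longrightarrow> y \<in> cball x0 r \<Longrightarrow> norm (F x - F y) \<le> L * norm (x - y)"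
    and bnd: "\<And>x. x \<in> cball x0 r \<Longrightarrow> norm (F x) \<le> M"
  shows "\<exists>T>0. \<exists>x. x 0 = x0 \<and> (\<forall>t\<in>{0..T}. x t \<in> cball x0 r \<and>
            (x has_vector_derivative F (x t)) (at t within {0..T}))"
proof -
  define G where "G p = (F (fst p), 0::'a)" for p :: "'a \<times> 'a"
  have fstb: "fst p \<in> cball x0 r" if "p \<in> cball (x0, 0) r" for p :: "'a \<times> 'a"
  proof -
    have "norm (fst p - x0) \<le> norm (p - (x0, 0))"
      using nfst[of "p - (x0, 0)"] by simp
    thus ?thesis using that by (simp add: dist_norm norm_minus_commute)
  qed
  have lipG: "norm (G p - G q) \<le> max L 0 * norm (p - q)"
    if "p \<in> cball (x0, 0) r" "q \<in> cball (x0, 0) r" for p q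
  proof -
    have "norm (G p - G q) = norm (F (fst p) - F (fst q))" unfolding G_def by (simp add: norm_Pair)
    also have "\<dots> \<le> L * norm (fst p - fst q)" by (rule lip[OF fstb[OF that(1)] fstb[OF that(2)]])
    also have "\<dots> \<le> max L 0 * norm (fst p - fst q)" by (intro mult_right_mono) auto
    also have "\<dots> \<le> max L 0 * norm (p - q)"
      using nfst[of "p - q"] by (intro mult_left_mono) auto
    finally show ?thesis .
  qed
  have bndG: "norm (G p) \<le> M" if "p \<in> cball (x0, 0) r" for p
    using bnd[OF fstb[OF that]] unfolding G_def by (simp add: norm_Pair)
  obtain T X where T: "T > 0" and X0: "X 0 = (x0, 0)"
    and X: "\<forall>t\<in>{0..T}. X t \<in> cball (x0, 0) r \<and> (X has_vector_derivative G (X t)) (at t within {0..T})"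
    using ode_exist_b[OF r lipG bndG] by blast
  show ?thesis
  proof (intro exI conjI ballI)
    show "T > 0" by (rule T)
    show "fst (X 0) = x0" using X0 by simp
    fix t assume t: "t \<in> {0..T}"
    show "fst (X t) \<in> cball x0 r" using X t fstb by blast
    have "((\<lambda>s. fst (X s)) has_vector_derivative fst (G (X t))) (at t within {0..T})"
      using bounded_linear.has_vector_derivative[OF bounded_linear_fst] X t by blast
    thus "((\<lambda>s. fst (X s)) has_vector_derivative F (fst (X t))) (at t within {0..T})"
      unfolding G_def by simp
  qed
qed

lemma ode_unique:
  fixes F :: "'a::real_normed_vector \<Rightarrow> 'a" and y1 y2 :: "real \<Rightarrow> 'a"
  assumes d1: "\<And>t. t \<in> {0..T} \<Longrightarrow> (y1 has_vector_derivative F (y1 t)) (at t within {0..T})"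
    and d2: "\<And>t. t \<in> {0..T} \<Longrightarrow> (y2 has_vector_derivative F (y2 t)) (at t within {0..T})"
    and init: "y1 0 = y2 0"
    and loc: "\<And>t. t \<in> {0..T} \<Longrightarrow> \<exists>r>0. \<exists>L. \<forall>x\<in>cball (y1 t) r. \<forall>y\<in>cball (y1 t) r.
                  norm (F x - F y) \<le> L * norm (x - y)"
  shows "\<forall>t\<in>{0..T}. y1 t = y2 t"
proof (cases "T < 0")
  case True thus ?thesis by simp
next
  case False
  hence T0: "0 \<le> T" by simp
  have c1: "continuous_on {0..T} y1"
    unfolding continuous_on_eq_continuous_within using has_vector_derivative_continuous[OF d1] by blast
  have c2: "continuous_on {0..T} y2"
    unfolding continuous_on_eq_continuous_within using has_vector_derivative_continuous[OF d2] by blast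
  define S where "S = {t\<in>{0..T}. \<forall>s\<in>{0..t}. y1 s = y2 s}"
  have S0: "0 \<in> S" unfolding S_def using T0 init by auto
  have Sne: "S \<noteq> {}" using S0 by auto
  have Sbdd: "bdd_above S" unfolding S_def by (rule bdd_aboveI[of _ T]) auto
  define \<tau> where "\<tau> = Sup S"
  have \<tau>T: "\<tau> \<le> T" unfolding \<tau>_def using Sne by (rule cSup_least) (auto simp: S_def)
  have \<tau>0: "0 \<le> \<tau>" unfolding \<tau>_def using S0 Sbdd by (rule cSup_upper)
  have before: "y1 s = y2 s" if s0: "0 \<le> s" and s\<tau>: "s < \<tau>" for s
  proof -
    obtain t where "t \<in> S" "s < t" using less_cSupD[OF Sne, of s] s\<tau> unfolding \<tau>_def by blast
    thus ?thesis using s0 unfolding S_def by auto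
  qed
  have at\<tau>: "y1 \<tau> = y2 \<tau>"
  proof (cases "\<tau> = 0")
    case True thus ?thesis using init by simp
  next
    case False
    hence \<tau>p: "0 < \<tau>" using \<tau>0 by simp
    define Z where "Z = {s \<in> {0..T}. y1 s - y2 s = 0}"
    have "closed Z" unfolding Z_def
      by (rule continuous_closed_preimage_constant) (auto intro: continuous_intros c1 c2)
    moreover have "{0..<\<tau>} \<subseteq> Z" unfolding Z_def using before \<tau>T by auto
    ultimately have "closure {0..<\<tau>} \<subseteq> Z" by (rule closure_minimal[rotated])
    hence "\<tau> \<in> Z" using \<tau>p by auto
    thus ?thesis unfolding Z_def by simp
  qed
  have \<tau>S: "\<tau> \<in> S" unfolding S_def using \<tau>0 \<tau>T before at\<tau> by (auto simp: le_less)
  have "\<not> \<tau> < T"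
  proof
    assume lt: "\<tau> < T"
    have \<tau>I: "\<tau> \<in> {0..T}" using \<tau>0 \<tau>T by simp
    obtain r L where r: "r > 0" and lipF: "\<forall>x\<in>cball (y1 \<tau>) r. \<forall>y\<in>cball (y1 \<tau>) r. norm (F x - F y) \<le> L * norm (x - y)"
      using loc[OF \<tau>I] by blast
    define L' where "L' = max L 1"
    have L': "L' > 0" "L \<le> L'" unfolding L'_def by auto
    obtain e1 where e1: "e1 > 0" "\<forall>s\<in>{0..T}. dist s \<tau> < e1 \<longrightarrow> dist (y1 s) (y1 \<tau>) < r"
      using c1 \<tau>I r unfolding continuous_on_iff by blast
    obtain e2 where e2: "e2 > 0" "\<forall>s\<in>{0..T}. dist s \<tau> < e2 \<longrightarrow> dist (y2 s) (y2 \<tau>) < r"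
      using c2 \<tau>I r unfolding continuous_on_iff by blast
    define h where "h = min (min e1 e2 / 2) (min (T - \<tau>) (1 / (2 * L')))"
    have ha: "h \<le> min e1 e2 / 2" unfolding h_def by (rule min.cobounded1)
    have hb: "h \<le> T - \<tau>" and hc: "h \<le> 1 / (2 * L')" unfolding h_def by auto
    have hpos: "h > 0" unfolding h_def using e1 e2 lt L' by auto
    have "h * L' \<le> 1 / (2 * L') * L'" using hc L' by (intro mult_right_mono) auto
    also have "\<dots> = 1/2" using L' by simp
    finally have h5: "h * L' \<le> 1/2" .
    have h: "h > 0" "h < e1" "h < e2" "\<tau> + h \<le> T" "h * L' \<le> 1/2"
      using hpos ha hb h5 e1 e2 by auto
    define J where "J = {\<tau>..\<tau> + h}"
    have JT: "J \<subseteq> {0..T}" unfolding J_def using \<tau>0 h by auto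
    have inball: "y1 s \<in> cball (y1 \<tau>) r \<and> y2 s \<in> cball (y1 \<tau>) r" if s: "s \<in> J" for s
    proof -
      have sT: "s \<in> {0..T}" using JT s by auto
      have "dist s \<tau> < e1" "dist s \<tau> < e2" using s h unfolding J_def by (auto simp: dist_real_def)
      thus ?thesis using e1(2) e2(2) sT at\<tau> by (auto simp: dist_commute less_imp_le)
    qed
    define g where "g s = y1 s - y2 s" for s
    have gder: "(g has_vector_derivative (F (y1 s) - F (y2 s))) (at s within J)" if s: "s \<in> J" for s
    proof -
      have sT: "s \<in> {0..T}" using JT s by auto
      show ?thesis unfolding g_def
        by (intro has_vector_derivative_diff has_vector_derivative_within_subset[OF d1[OF sT] JT]
            has_vector_derivative_within_subset[OF d2[OF sT] JT])
    qed
    have gc: "continuous_on J g" unfolding g_def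
      using continuous_on_subset[OF c1 JT] continuous_on_subset[OF c2 JT] by (intro continuous_intros)
    obtain s0 where s0: "s0 \<in> J" "\<And>s. s \<in> J \<Longrightarrow> norm (g s) \<le> norm (g s0)"
    proof -
      have "\<exists>s0\<in>J. \<forall>s\<in>J. norm (g s) \<le> norm (g s0)"
      proof (rule continuous_attains_sup)
        show "compact J" unfolding J_def by simp
        show "J \<noteq> {}" unfolding J_def using h by simp
        show "continuous_on J (\<lambda>s. norm (g s))" using gc by (rule continuous_on_norm)
      qed
      thus ?thesis using that by blast
    qed
    define m where "m = norm (g s0)"
    have gbound: "norm (F (y1 s) - F (y2 s)) \<le> L' * m" if s: "s \<in> J" for s
    proof -
      have "norm (F (y1 s) - F (y2 s)) \<le> L * norm (y1 s - y2 s)" using lipF inball[OF s] by blast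
      also have "\<dots> \<le> L' * norm (g s)" unfolding g_def using L' by (intro mult_right_mono) auto
      also have "\<dots> \<le> L' * m" unfolding m_def using s0(2)[OF s] L' by (intro mult_left_mono) auto
      finally show ?thesis .
    qed
    have g\<tau>: "g \<tau> = 0" unfolding g_def using at\<tau> by simp
    have "norm (g s0 - g \<tau>) \<le> (L' * m) * (s0 - \<tau>)"
      by (rule mvt_vec[of \<tau> "\<tau> + h"]) (use h gder gbound s0(1) in \<open>auto simp: J_def\<close>)
    also have "\<dots> \<le> (L' * m) * h" using s0(1) L' unfolding J_def m_def by (intro mult_left_mono) auto
    also have "\<dots> = (h * L') * m" by simp
    also have "\<dots> \<le> (1/2) * m" using h(5) unfolding m_def by (intro mult_right_mono) auto
    finally have "m \<le> (1/2) * m" unfolding m_def g\<tau> by simp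
    hence m0: "m = 0" unfolding m_def by simp
    have "\<tau> + h \<in> S"
      unfolding S_def
    proof (intro CollectI conjI ballI)
      show "\<tau> + h \<in> {0..T}" using \<tau>0 h by auto
      fix s assume s: "s \<in> {0..\<tau> + h}"
      show "y1 s = y2 s"
      proof (cases "s \<le> \<tau>")
        case True thus ?thesis using \<tau>S s unfolding S_def by auto
      next
        case False
        hence "s \<in> J" using s unfolding J_def by auto
        hence "norm (g s) \<le> 0" using s0(2) m0 unfolding m_def by metis
        thus ?thesis unfolding g_def by simp
      qed
    qed
    hence "\<tau> + h \<le> \<tau>" unfolding \<tau>_def using Sbdd by (rule cSup_upper)
    thus False using h by simp
  qed
  hence "\<tau> = T" using \<tau>T by simp
  thus ?thesis using \<tau>S unfolding S_def by auto
qed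

theorem theorem2p1:
  fixes A :: "'a::{real_inner, complete_space} \<Rightarrow> 'a set"
    and \<theta> :: real and p :: nat and x0 :: 'a
  assumes "maximal_monotone A"
    and "{x. 0 \<in> A x} \<noteq> {}"
    and "\<theta> > 0"
    and "p \<ge> 1"
    and "0 \<notin> A x0"
  shows "\<exists>t0 > 0. \<exists>x lam.
           cl_solution A \<theta> p x0 t0 x lam \<and>
           (\<forall>y mu. cl_solution A \<theta> p x0 t0 y mu \<longrightarrow> (\<forall>t \<in> {0..t0}. y t = x t \<and> mu t = lam t)) \<and>
           (\<exists>x'. (\<forall>t \<in> {0..t0}. (x has_vector_derivative x' t) (at t within {0..t0})) \<and>
                 continuous_on {0..t0} x') \<and>
           locally_lipschitz_on {0..t0} lam"
proof -
  note mm = assms(1) and th = assms(3) and p1 = assms(4) and x0A = assms(5)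
  obtain e where e: "0 \<in> A e" using assms(2) by auto
  define n where "n = p - 1"
  define Lm where "Lm = LamF A \<theta> n"
  define F where "F x = resolvent A (Lm x) x - x" for x
  have Fdd: "norm (F x) = dd A (Lm x) x" for x unfolding F_def dd_def by (simp add: norm_minus_commute)
  have normeq: "norm (resolvent A l y - y) ^ (p - 1) = dd A l y ^ n" for l y
    unfolding dd_def n_def by (simp add: norm_minus_commute)
  have LL: "\<exists>r>0. \<exists>L M. (\<forall>x\<in>cball z r. (n = 0 \<or> 0 \<notin> A x) \<and> norm (F x) \<le> M) \<and>
           (\<forall>x\<in>cball z r. \<forall>y\<in>cball z r. norm (F x - F y) \<le> L * norm (x - y) \<and>
              \<bar>Lm x - Lm y\<bar> \<le> L * norm (x - y))" if "n = 0 \<or> 0 \<notin> A z" for z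
    using local_lip[OF mm th e that] unfolding F_def Lm_def by blast
  obtain r L M where r: "r > 0"
    and P1: "\<And>x. x \<in> cball x0 r \<Longrightarrow> (n = 0 \<or> 0 \<notin> A x) \<and> norm (F x) \<le> M"
    and P2: "\<And>x y. x \<in> cball x0 r \<Longrightarrow> y \<in> cball x0 r \<Longrightarrow> norm (F x - F y) \<le> L * norm (x - y) \<and>
              \<bar>Lm x - Lm y\<bar> \<le> L * norm (x - y)"
    using LL[of x0] x0A by blast
  obtain T x where T: "T > 0" and x0': "x 0 = x0"
    and X: "\<And>t. t \<in> {0..T} \<Longrightarrow> x t \<in> cball x0 r \<and> (x has_vector_derivative F (x t)) (at t within {0..T})"
    using ode_exist[of r x0 F L M] r P1 P2 by blast
  have root: "Lm y > 0" "Lm y * dd A (Lm y) y ^ n = \<theta>" if "n = 0 \<or> 0 \<notin> A y" for y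
    unfolding Lm_def using Lam_root(1,2)[OF mm th e that] by blast+
  define lam where "lam t = Lm (x t)" for t
  have sol: "cl_solution A \<theta> p x0 T x lam"
    unfolding cl_solution_def
  proof (intro conjI ballI)
    show "x 0 = x0" by (rule x0')
    fix t assume t: "t \<in> {0..T}"
    have Pt: "n = 0 \<or> 0 \<notin> A (x t)" using P1 X[OF t] by blast
    show "lam t > 0" unfolding lam_def by (rule root(1)[OF Pt])
    show "(x has_vector_derivative (resolvent A (lam t) (x t) - x t)) (at t within {0..T})"
      using X[OF t] unfolding F_def lam_def by blast
    show "lam t * norm (resolvent A (lam t) (x t) - x t) ^ (p - 1) = \<theta>"
      unfolding normeq lam_def by (rule root(2)[OF Pt])
  qed
  have Fc: "continuous_on (cball x0 r) F"
  proof (rule lipschitz_on_continuous_on)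
    show "(max L 0)-lipschitz_on (cball x0 r) F"
    proof (rule lipschitz_onI)
      fix u v assume "u \<in> cball x0 r" "v \<in> cball x0 r"
      hence "norm (F u - F v) \<le> L * norm (u - v)" using P2 by blast
      also have "\<dots> \<le> max L 0 * norm (u - v)" by (intro mult_right_mono) auto
      finally show "dist (F u) (F v) \<le> max L 0 * dist u v" by (simp add: dist_norm)
    qed simp
  qed
  have xc: "continuous_on {0..T} x"
    unfolding continuous_on_eq_continuous_within
    using X has_vector_derivative_continuous by blast
  have uniq: "\<forall>t\<in>{0..T}. y t = x t \<and> mu t = lam t" if ys: "cl_solution A \<theta> p x0 T y mu" for y mu
  proof -
    have y0: "y 0 = x0" and ys': "\<And>t. t \<in> {0..T} \<Longrightarrow> mu t > 0 \<and>
        (y has_vector_derivative (resolvent A (mu t) (y t) - y t)) (at t within {0..T}) \<and>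
        mu t * norm (resolvent A (mu t) (y t) - y t) ^ (p - 1) = \<theta>"
      using ys unfolding cl_solution_def by auto
    have muL: "mu t = Lm (y t)" and yP: "n = 0 \<or> 0 \<notin> A (y t)" if t: "t \<in> {0..T}" for t
    proof -
      have mp: "mu t > 0" and me: "mu t * dd A (mu t) (y t) ^ n = \<theta>"
        using ys'[OF t] normeq by auto
      show yP: "n = 0 \<or> 0 \<notin> A (y t)"
      proof (cases "n = 0")
        case False thus ?thesis using root_in_Omega[OF mm th e _ mp me] by simp
      qed simp
      show "mu t = Lm (y t)" unfolding Lm_def by (rule Lam_root(3)[OF mm th e yP mp me])
    qed
    have yder: "(y has_vector_derivative F (y t)) (at t within {0..T})" if t: "t \<in> {0..T}" for t
      using ys'[OF t] muL[OF t] unfolding F_def by simp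
    have eq: "\<forall>t\<in>{0..T}. x t = y t"
    proof (rule ode_unique[where F = F])
      show "\<And>t. t \<in> {0..T} \<Longrightarrow> (x has_vector_derivative F (x t)) (at t within {0..T})" using X by blast
      show "\<And>t. t \<in> {0..T} \<Longrightarrow> (y has_vector_derivative F (y t)) (at t within {0..T})" by (rule yder)
      show "x 0 = y 0" using x0' y0 by simp
      fix t assume t: "t \<in> {0..T}"
      have Pt: "n = 0 \<or> 0 \<notin> A (x t)" using P1 X[OF t] by blast
      obtain r' L' M' where "r' > 0"
        and "\<forall>u\<in>cball (x t) r'. \<forall>v\<in>cball (x t) r'. norm (F u - F v) \<le> L' * norm (u - v) \<and>
              \<bar>Lm u - Lm v\<bar> \<le> L' * norm (u - v)"
        using LL[OF Pt] by blast
      thus "\<exists>r>0. \<exists>L. \<forall>u\<in>cball (x t) r. \<forall>v\<in>cball (x t) r. norm (F u - F v) \<le> L * norm (u - v)"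
        by blast
    qed
    show ?thesis
    proof
      fix t assume t: "t \<in> {0..T}"
      have "y t = x t" using eq t by simp
      moreover have "mu t = lam t" unfolding lam_def using muL[OF t] \<open>y t = x t\<close> by simp
      ultimately show "y t = x t \<and> mu t = lam t" by simp
    qed
  qed
  have dercont: "\<exists>x'. (\<forall>t \<in> {0..T}. (x has_vector_derivative x' t) (at t within {0..T})) \<and>
                 continuous_on {0..T} x'"
  proof (intro exI conjI)
    show "\<forall>t\<in>{0..T}. (x has_vector_derivative F (x t)) (at t within {0..T})" using X by blast
    have "x ` {0..T} \<subseteq> cball x0 r" using X by blast
    thus "continuous_on {0..T} (\<lambda>t. F (x t))" using continuous_on_compose2[OF Fc xc] by blast
  qed
  have xlip: "norm (x s - x s') \<le> max M 0 * dist s s'" if s: "s \<in> {0..T}" and s': "s' \<in> {0..T}" for s s'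
  proof -
    have gen: "norm (x b - x a) \<le> max M 0 * (b - a)" if ab: "a \<le> b" "a \<in> {0..T}" "b \<in> {0..T}" for a b
    proof (rule mvt_vec[of a b])
      show "a \<le> b" by (rule ab(1))
      have sub: "{a..b} \<subseteq> {0..T}" using ab by auto
      show "\<And>u. u \<in> {a..b} \<Longrightarrow> (x has_vector_derivative F (x u)) (at u within {a..b})"
        using X sub by (blast intro: has_vector_derivative_within_subset)
      show "\<And>u. u \<in> {a..b} \<Longrightarrow> norm (F (x u)) \<le> max M 0"
        using X P1 sub by (meson max.coboundedI1 order_trans subsetD)
      show "b \<in> {a..b}" using ab by simp
    qed
    show ?thesis
    proof (cases "s \<le> s'")
      case True thus ?thesis using gen[OF True s s'] by (simp add: dist_real_def norm_minus_commute)
    next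
      case False thus ?thesis using gen[of s' s] s s' by (simp add: dist_real_def)
    qed
  qed
  have lamlip: "(max L 0 * max M 0)-lipschitz_on {0..T} lam"
  proof (rule lipschitz_onI)
    fix s s' assume s: "s \<in> {0..T}" and s': "s' \<in> {0..T}"
    have "dist (lam s) (lam s') = \<bar>Lm (x s) - Lm (x s')\<bar>" unfolding lam_def by (simp add: dist_real_def)
    also have "\<dots> \<le> L * norm (x s - x s')" using P2 X s s' by blast
    also have "\<dots> \<le> max L 0 * norm (x s - x s')" by (intro mult_right_mono) auto
    also have "\<dots> \<le> max L 0 * (max M 0 * dist s s')" by (intro mult_left_mono xlip[OF s s']) auto
    finally show "dist (lam s) (lam s') \<le> max L 0 * max M 0 * dist s s'" by (simp add: mult.assoc)
  qed simp
  have "locally_lipschitz_on {0..T} lam"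
    unfolding locally_lipschitz_on_def
  proof (intro ballI exI conjI)
    show "(0::real) < 1" by simp
    show "(max L 0 * max M 0)-lipschitz_on (cball t 1 \<inter> {0..T}) lam" for t
      by (rule lipschitz_on_subset[OF lamlip]) auto
  qed
  thus ?thesis using T sol uniq dercont by blast
qed

end
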